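(* The code $\mathcal C_3(\mathbb D_d)$ is equal to the $\mathbb F_3$-linear code \[ \Big\{\sum_{i=0}^{m-1}\mathrm{Tr}_{2m}\big(b_i t^{(3^m+1)3^i+1}\big)+\sum_{i=0}^{2m-1}\mathrm{Tr}_{2m}\big(b_i' t^{3^i+1}\big)+\sum_{i=0}^{m-1}\mathrm{Tr}_{m}\big(c_i t^{(3^m+1)(3^i+1)}\big)+\mathrm{Tr}_{2m}(bt)+h \;:\; b,b_i,b_i'\in\mathbb F_{3^{2m}},\ c_i\in\mathbb F_{3^m},\ h\in\mathbb F_3\Big\} \] (each element being the function of $t\in\mathbb F_{3^{2m}}$ shown). Moreover, $\mathcal C_3(\mathbb D_d)$ is invariant under all coordinate permutations $t\mapsto s_1t+s_2$ ($s_1\in\mathbb F_{3^{2m}}^*$, $s_2\in\mathbb F_{3^{2m}}$), and consequently for every $w>0$ such that $\mathcal C_3(\mathbb D_d)$ has codewords of Hamming weight $w$, the supports of the codewords of weight $w$ form a $2$-design on the point set $\mathbb F_{3^{2m}}$ (every $2$-subset of $\mathbb F_{3^{2m}}$ is contained in the same number of these supports).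
   Context: Let $m\ge 2$ be an integer and $q=3^{2m}$. For $s\in\{m,2m\}$ let $\mathrm{Tr}_s:\mathbb F_{3^s}\to\mathbb F_3$ denote the absolute trace, $\mathrm{Tr}_s(x)=\sum_{i=0}^{s-1}x^{3^i}$. Vectors in $\mathbb F_3^{q}$ are indexed by the elements of $\mathbb F_{3^{2m}}$; a function $f:\mathbb F_{3^{2m}}\to\mathbb F_3$ is identified with the vector $(f(t))_{t\in\mathbb F_{3^{2m}}}$, and products of such functions are taken pointwise. Let $\mathcal C(2m,3)=\{c(a,b,h): a\in\mathbb F_{3^m}, b\in\mathbb F_{3^{2m}}, h\in\mathbb F_3\}$ where $c(a,b,h)=(\mathrm{Tr}_{2m}(at^{3^m+1}+bt)+h)_{t\in\mathbb F_{3^{2m}}}$; this is a ternary linear code of length $3^{2m}$. Let $d$ be the minimum Hamming weight of a nonzero codeword of $\mathcal C(2m,3)$ (it equals $2\cdot 3^{2m-1}-3^{m-1}$). Let $\mathbb D_d$ be the incidence structure with point set $\mathbb F_{3^{2m}}$ whose blocks are the supports $\{t: c_t\neq 0\}$ of the codewords $c\in\mathcal C(2m,3)$ of weight $d$. Let $\mathcal C_3(\mathbb D_d)$ be the $\mathbb F_3$-linear span in $\mathbb F_3^{\mathbb F_{3^{2m}}}$ of the incidence vectors of the blocks (the incidence vector of a block $B$ has entry $1$ at $t\in B$ and $0$ elsewhere). *)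

theory Defs
  imports Main
begin

text \<open>The ambient field F_{3^{2m}} is a finite field type 'a with CARD('a) = 3^(2m).
  Vectors in F_3^{F_{3^{2m}}} are functions 'a \<Rightarrow> 'a taking values in the prime field.\<close>

definition F3 :: "'a::field set" where
  "F3 = range of_int"

definition subF :: "nat \<Rightarrow> 'a::field set" where
  "subF s = {x. x ^ (3 ^ s) = x}"

definition tr :: "nat \<Rightarrow> 'a::field \<Rightarrow> 'a" where
  "tr s x = (\<Sum>i<s. x ^ (3 ^ i))"

definition hweight :: "('a \<Rightarrow> 'b::zero) \<Rightarrow> nat" where
  "hweight c = card {t. c t \<noteq> 0}"

definition supp :: "('a \<Rightarrow> 'b::zero) \<Rightarrow> 'a set" where
  "supp c = {t. c t \<noteq> 0}"

definition codeC :: "nat \<Rightarrow> ('a::field \<Rightarrow> 'a) set" where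
  "codeC m = {(\<lambda>t. tr (2*m) (a * t ^ (3^m + 1) + b * t) + h) | a b h.
               a \<in> subF m \<and> h \<in> F3}"

definition dmin :: "nat \<Rightarrow> 'a::field itself \<Rightarrow> nat" where
  "dmin m _ = Min {hweight c | c :: 'a \<Rightarrow> 'a. c \<in> codeC m \<and> c \<noteq> (\<lambda>_. 0)}"

definition blocksD :: "nat \<Rightarrow> 'a::field set set" where
  "blocksD m = {supp c | c. c \<in> codeC m \<and> hweight c = dmin m TYPE('a)}"

definition incvec :: "'a set \<Rightarrow> ('a \<Rightarrow> 'b::{zero,one})" where
  "incvec B = (\<lambda>t. if t \<in> B then 1 else 0)"

definition span3 :: "('a \<Rightarrow> 'b::field) set \<Rightarrow> ('a \<Rightarrow> 'b) set" where
  "span3 S = {(\<lambda>t. \<Sum>v\<in>V. k v * v t) | V k. finite V \<and> V \<subseteq> S \<and> (\<forall>v\<in>V. k v \<in> F3)}"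

definition codeCD :: "nat \<Rightarrow> ('a::field \<Rightarrow> 'a) set" where
  "codeCD m = span3 (incvec ` blocksD m)"

definition codeE :: "nat \<Rightarrow> ('a::field \<Rightarrow> 'a) set" where
  "codeE m = {(\<lambda>t. (\<Sum>i<m. tr (2*m) (bb i * t ^ ((3^m + 1) * 3^i + 1)))
                 + (\<Sum>i<2*m. tr (2*m) (bb' i * t ^ (3^i + 1)))
                 + (\<Sum>i<m. tr m (cc i * t ^ ((3^m + 1) * (3^i + 1))))
                 + tr (2*m) (b * t) + h)
              | bb bb' cc b h. (\<forall>i. cc i \<in> subF m) \<and> h \<in> F3}"

end

theory Submission
  imports Defs "HOL-Computational_Algebra.Polynomial"
begin

lemma card_smul_zero:
  fixes x :: "'a::{comm_ring_1,finite}"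
  shows "of_nat (card (UNIV::'a set)) * x = 0"
proof -
  have "(\<Sum>y\<in>UNIV. x + y) = (\<Sum>y\<in>UNIV. y)"
    by (rule sum.reindex_bij_witness[of _ "\<lambda>y. y - x" "\<lambda>y. x + y"]) auto
  then have "(\<Sum>y\<in>(UNIV::'a set). x) = 0" by (simp add: sum.distrib)
  then show ?thesis by (simp add: mult.commute)
qed

lemma sum_split_add: "(\<Sum>i<a+b. f i) = (\<Sum>i<a. f i) + (\<Sum>i<b. f (a+i))"
  for f :: "nat \<Rightarrow> 'b::comm_monoid_add"
  by (induction b) (simp_all add: add.assoc)

lemma pow_unit_card:
  fixes x :: "'a::{field,finite}"
  assumes "x \<noteq> 0"
  shows "x ^ (card (UNIV::'a set) - 1) = 1"
proof -
  let ?U = "UNIV - {0::'a}"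
  have "(\<Prod>w\<in>?U. x * w) = (\<Prod>w\<in>?U. w)"
    by (rule prod.reindex_bij_witness[of _ "\<lambda>y. y / x" "\<lambda>y. x * y"]) (use assms in auto)
  moreover have "(\<Prod>w\<in>?U. x * w) = x ^ card ?U * (\<Prod>w\<in>?U. w)"
    by (simp add: prod.distrib)
  moreover have "(\<Prod>w\<in>?U. w) \<noteq> 0" by simp
  ultimately have "x ^ card ?U = 1" by simp
  moreover have "card ?U = card (UNIV::'a set) - 1" by (simp add: card_Diff_singleton)
  ultimately show ?thesis by simp
qed

locale GF =
  fixes m :: nat and T :: "'a::{field,finite} itself"
  assumes m2: "m \<ge> 2" and cardA: "card (UNIV::'a set) = 3^(2*m)"
begin

lemma three_zero: "(3::'a) = 0"
proof -
  have "of_nat (3^(2*m)) * (1::'a) = 0" using card_smul_zero[where 'a='a] cardA by metis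
  then have "(3::'a)^(2*m) = 0" by simp
  then show ?thesis by simp
qed

lemma two_ne: "(2::'a) \<noteq> 0"
proof
  assume h: "(2::'a) = 0"
  have "(3::'a) = 2 + 1" by simp
  with h three_zero show False by simp
qed

lemma four_eq: "(4::'a) = 1"
proof -
  have "(4::'a) = 1 + 3" by simp
  then show ?thesis using three_zero by simp
qed

lemma mone_eq: "(-1::'a) = 2"
proof -
  have "(2::'a) + 1 = 3" by simp
  then have "(2::'a) + 1 = 0" using three_zero by simp
  then show ?thesis by (simp add: eq_neg_iff_add_eq_0)
qed

lemma mod3: "(x::'a) = y + 3 * z \<Longrightarrow> x = y"
  using three_zero by simp

lemma frob3: "((x::'a) + y)^3 = x^3 + y^3"
proof -
  have "(x+y)^3 = x^3 + y^3 + 3*(x^2*y + x*y^2)"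
    by (simp add: power3_eq_cube power2_eq_square algebra_simps)
  then show ?thesis using three_zero by simp
qed

lemma frob: "((x::'a) + y)^(3^i) = x^(3^i) + y^(3^i)"
proof (induction i)
  case 0 then show ?case by simp
next
  case (Suc i)
  have "(x+y)^(3^Suc i) = ((x+y)^(3^i))^3" by (simp add: power_mult[symmetric] mult.commute)
  also have "\<dots> = (x^(3^i))^3 + (y^(3^i))^3" using Suc frob3 by simp
  also have "\<dots> = x^(3^Suc i) + y^(3^Suc i)" by (simp add: power_mult[symmetric] mult.commute)
  finally show ?case .
qed

lemma frob_neg: "(-(x::'a))^(3^i) = -(x^(3^i))"
  by (simp add: power_minus_odd)

lemma frob_diff: "((x::'a) - y)^(3^i) = x^(3^i) - y^(3^i)"
  using frob[of x "-y" i] frob_neg[of y i] by simp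

lemma frob_sum: "finite A \<Longrightarrow> (\<Sum>j\<in>A. (f j::'a))^(3^i) = (\<Sum>j\<in>A. (f j)^(3^i))"
  by (induction A rule: finite_induct) (simp_all add: frob)

lemma pow_q: "(x::'a) ^ (3^(2*m)) = x"
proof (cases "x = 0")
  case True then show ?thesis by simp
next
  case False
  have "x ^ (3^(2*m) - 1) = 1" using pow_unit_card[OF False] cardA by simp
  moreover have "3^(2*m) = Suc (3^(2*m) - 1)" by simp
  ultimately show ?thesis by (metis power_Suc mult_1_right)
qed

lemma pow_pow_comm: "((x::'a)^a)^b = (x^b)^a"
  by (simp add: power_mult[symmetric] mult.commute)

lemma pow3_add: "(x::'a)^(3^(i+j)) = (x^(3^i))^(3^j)"
  by (simp add: power_add power_mult)

lemma tr_add: "tr n ((x::'a) + y) = tr n x + tr n y"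
  unfolding tr_def by (simp add: frob sum.distrib)

lemma tr_neg: "tr n (-(x::'a)) = - tr n x"
  unfolding tr_def by (simp add: frob_neg sum_negf)

lemma tr_diff: "tr n ((x::'a) - y) = tr n x - tr n y"
  unfolding tr_def by (simp add: frob_diff sum_subtractf)

lemma tr_zero: "tr n (0::'a) = 0"
  unfolding tr_def by (simp add: power_0_left)

lemma tr_sum: "finite A \<Longrightarrow> tr n (\<Sum>j\<in>A. (f j::'a)) = (\<Sum>j\<in>A. tr n (f j))"
  by (induction A rule: finite_induct) (simp_all add: tr_add tr_zero)

lemma of_int_mod3: "(of_int k::'a) = of_int (k mod 3)"
proof -
  have "(of_int k::'a) = of_int (k mod 3) + of_int (3 * (k div 3))"
    by (metis mod_mult_div_eq of_int_add add.commute)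
  also have "\<dots> = of_int (k mod 3)" using three_zero by simp
  finally show ?thesis .
qed

lemma F3_eq: "(F3::'a set) = {0, 1, -1}"
  unfolding F3_def
proof (intro equalityI subsetI)
  fix x assume "x \<in> range (of_int :: int \<Rightarrow> 'a)"
  then obtain k where x: "x = of_int k" by auto
  have "k mod 3 = 0 \<or> k mod 3 = 1 \<or> k mod 3 = 2" by auto
  then show "x \<in> {0,1,-1}" using of_int_mod3[of k] x mone_eq by auto
next
  fix x :: 'a assume "x \<in> {0,1,-1}"
  then have "x = of_int 0 \<or> x = of_int 1 \<or> x = of_int (-1)" by auto
  then show "x \<in> range of_int" by blast
qed

lemma F3_cube: "((x::'a) \<in> F3) = (x^3 = x)"
proof -
  have "x^3 - x = x * (x - 1) * (x + 1)" by algebra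
  then have "(x^3 = x) = (x * (x - 1) * (x + 1) = 0)" by (metis eq_iff_diff_eq_0)
  also have "\<dots> = (x = 0 \<or> x - 1 = 0 \<or> x + 1 = 0)" by simp
  also have "\<dots> = (x = 0 \<or> x = 1 \<or> x = -1)"
    by (simp only: eq_iff_diff_eq_0[symmetric] eq_neg_iff_add_eq_0[symmetric])
  finally show ?thesis using F3_eq by auto
qed

lemma F3_pow: "(k::'a) \<in> F3 \<Longrightarrow> k^(3^i) = k"
proof (induction i)
  case 0 then show ?case by simp
next
  case (Suc i)
  have "k^(3^Suc i) = (k^(3^i))^3" by (simp add: power_mult[symmetric] mult.commute)
  then show ?case using Suc F3_cube by simp
qed

lemma F3_add: "(x::'a) \<in> F3 \<Longrightarrow> y \<in> F3 \<Longrightarrow> x + y \<in> F3"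
  unfolding F3_cube using frob3[of x y] by simp

lemma F3_mult: "(x::'a) \<in> F3 \<Longrightarrow> y \<in> F3 \<Longrightarrow> x * y \<in> F3"
  by (simp add: F3_cube power_mult_distrib)

lemma F3_neg: "(x::'a) \<in> F3 \<Longrightarrow> - x \<in> F3"
  by (simp add: F3_cube)

lemma F3_0: "(0::'a) \<in> F3" and F3_1: "(1::'a) \<in> F3" and F3_m1: "(-1::'a) \<in> F3"
  and F3_2: "(2::'a) \<in> F3"
  unfolding F3_def
  by (metis rangeI of_int_0, metis rangeI of_int_1, metis rangeI of_int_1 of_int_minus,
      metis rangeI of_int_numeral)

lemma F3_sq: "(x::'a) \<in> F3 \<Longrightarrow> x \<noteq> 0 \<Longrightarrow> x^2 = 1"
  using F3_eq by auto

lemma tr_scal: "(k::'a) \<in> F3 \<Longrightarrow> tr n (k * x) = k * tr n x"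
  unfolding tr_def by (simp add: power_mult_distrib F3_pow sum_distrib_left)

lemma tr_frob1:
  assumes "(x::'a)^(3^n) = x"
  shows "tr n (x^3) = tr n x"
proof -
  have e: "(x^3)^(3^i) = x^(3^Suc i)" for i by (simp add: power_mult[symmetric] mult.commute)
  have "tr n (x^3) = (\<Sum>i<n. x^(3^Suc i))" unfolding tr_def e by simp
  also have "\<dots> = (\<Sum>i<Suc n. x^(3^i)) - x^(3^0)" by (subst sum.lessThan_Suc_shift) simp
  also have "\<dots> = tr n x" unfolding tr_def using assms by simp
  finally show ?thesis .
qed

lemma tr_frob:
  assumes "(x::'a)^(3^n) = x"
  shows "tr n (x^(3^j)) = tr n x"
proof (induction j)
  case 0 then show ?case by simp
next
  case (Suc j)
  have a: "(x^(3^j))^(3^n) = x^(3^j)" using assms by (metis pow_pow_comm)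
  have "x^(3^Suc j) = (x^(3^j))^3" by (simp add: power_mult[symmetric] mult.commute)
  then show ?case using tr_frob1[OF a] Suc by simp
qed

lemma tr_F3:
  assumes "(x::'a)^(3^n) = x"
  shows "tr n x \<in> F3"
proof -
  have "(tr n x)^3 = tr n (x^3)" unfolding tr_def
    using frob_sum[of "{..<n}" "\<lambda>i. x^(3^i)" 1] by (simp add: pow_pow_comm[of x _ 3])
  then show ?thesis using tr_frob1[OF assms] F3_cube by simp
qed

lemma T2_F3: "tr (2*m) (x::'a) \<in> F3"
  by (rule tr_F3) (simp add: pow_q)

lemma T2_frob: "tr (2*m) ((x::'a)^(3^j)) = tr (2*m) x"
  by (rule tr_frob) (simp add: pow_q)

lemma pow_q_gen: "(x::'a)^(3^(2*m+j)) = x^(3^j)"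
  by (simp add: pow3_add pow_q)

lemma subF_add: "x \<in> subF m \<Longrightarrow> y \<in> subF m \<Longrightarrow> (x::'a) + y \<in> subF m"
  unfolding subF_def by (simp add: frob)
lemma subF_mult: "x \<in> subF m \<Longrightarrow> y \<in> subF m \<Longrightarrow> (x::'a) * y \<in> subF m"
  unfolding subF_def by (simp add: power_mult_distrib)
lemma subF_neg: "x \<in> subF m \<Longrightarrow> - (x::'a) \<in> subF m"
  unfolding subF_def by (simp add: frob_neg)
lemma subF_diff: "x \<in> subF m \<Longrightarrow> y \<in> subF m \<Longrightarrow> (x::'a) - y \<in> subF m"
  unfolding subF_def by (simp add: frob_diff)
lemma subF_inv: "x \<in> subF m \<Longrightarrow> inverse (x::'a) \<in> subF m"
  unfolding subF_def by (simp add: power_inverse)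
lemma subF_div: "x \<in> subF m \<Longrightarrow> y \<in> subF m \<Longrightarrow> (x::'a) / y \<in> subF m"
  unfolding subF_def by (simp add: power_divide)
lemma subF_pow: "x \<in> subF m \<Longrightarrow> (x::'a) ^ k \<in> subF m"
  unfolding subF_def using pow_pow_comm[of x k "3^m"] by simp
lemma F3_subF: "(x::'a) \<in> F3 \<Longrightarrow> x \<in> subF m"
  unfolding subF_def by (simp add: F3_pow)
lemma subF_0: "(0::'a) \<in> subF m" and subF_1: "(1::'a) \<in> subF m"
  unfolding subF_def by simp_all

lemma N_subF: "(t::'a)^(3^m+1) \<in> subF m"
proof -
  have e0: "(3::nat)^m*3^m = 3^(2*m)" by (simp add: power_add[symmetric] mult_2)
  have e: "(3^m+1)*3^m = 3^(2*m) + (3^m::nat)"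
    using e0 by (simp add: distrib_right)
  have "(t^(3^m+1))^(3^m) = t^((3^m+1)*3^m)" by (simp only: power_mult)
  also have "\<dots> = t^(3^(2*m)) * t^(3^m)" by (simp only: e power_add)
  finally have "(t^(3^m+1))^(3^m) = t^(3^(2*m)) * t^(3^m)" .
  then show ?thesis unfolding subF_def by (simp add: pow_q)
qed

lemma subF_frob: "(x::'a) \<in> subF m \<Longrightarrow> x^(3^(m+i)) = x^(3^i)"
  unfolding subF_def by (simp add: pow3_add)

lemma T2_sub: "(y::'a) \<in> subF m \<Longrightarrow> tr (2*m) y = 2 * tr m y"
proof -
  assume y: "y \<in> subF m"
  have "tr (2*m) y = (\<Sum>i<m+m. y^(3^i))" unfolding tr_def by (simp add: mult_2)
  also have "\<dots> = tr m y + (\<Sum>i<m. y^(3^(m+i)))" unfolding sum_split_add tr_def ..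
  also have "\<dots> = tr m y + tr m y" unfolding tr_def using subF_frob[OF y] by simp
  finally show ?thesis by simp
qed

lemma Tm_F3: "(y::'a) \<in> subF m \<Longrightarrow> tr m y \<in> F3"
  by (rule tr_F3) (simp add: subF_def)

end

lemma card_roots_le:
  fixes p :: "'a::field poly"
  assumes "p \<noteq> 0" "degree p \<le> d"
  shows "card {x. poly p x = 0} \<le> d"
  using card_poly_roots_bound[OF assms(1)] assms(2) by linarith

lemma sum_eq_bound:
  fixes f :: "'b \<Rightarrow> nat"
  assumes "finite A" "\<forall>x\<in>A. f x \<le> b" "card A * b \<le> sum f A"
  shows "\<forall>x\<in>A. f x = b"
proof (rule ccontr)
  assume "\<not> (\<forall>x\<in>A. f x = b)"
  then obtain x0 where "x0 \<in> A" "f x0 < b" using assms(2) by force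
  then have "sum f A < sum (\<lambda>_. b) A"
    using assms(1,2) by (intro sum_strict_mono_ex1) auto
  then show False using assms(3) by simp
qed

context GF
begin

lemma roots_tr:
  assumes "n \<ge> 1" "(a::'a) \<noteq> 0"
  shows "card {y::'a. tr n (a*y) = c} \<le> 3^(n-1)"
proof -
  define p where "p = (\<Sum>i<n. monom (a^(3^i)) (3^i)) - [:c:]"
  have ev: "poly p y = tr n (a*y) - c" for y
    unfolding p_def tr_def by (simp add: poly_sum poly_monom power_mult_distrib)
  have inj3: "(3::nat)^i = 3^j \<longleftrightarrow> i = j" for i j by simp
  have cf: "coeff p k = (\<Sum>i<n. if 3^i = k then a^(3^i) else 0) - (if k = 0 then c else 0)" for k
    unfolding p_def by (simp add: coeff_sum coeff_monom coeff_pCons split: nat.split)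
  have "coeff p (3^(n-1)) = a^(3^(n-1))"
  proof -
    have "(\<Sum>i<n. if (3::nat)^i = 3^(n-1) then a^(3^i) else 0) = (\<Sum>i<n. if i = n-1 then a^(3^i) else 0)"
      by (intro sum.cong) auto
    also have "\<dots> = a^(3^(n-1))" using assms(1) by (simp add: sum.delta')
    finally show ?thesis unfolding cf by simp
  qed
  then have "p \<noteq> 0" using assms(2) by auto
  moreover have "degree p \<le> 3^(n-1)"
  proof (rule degree_le, intro allI impI)
    fix k :: nat assume k: "3^(n-1) < k"
    have "\<forall>i<n. (3::nat)^i \<noteq> k"
    proof (intro allI impI)
      fix i assume "i < n"
      then have "(3::nat)^i \<le> 3^(n-1)" by (intro power_increasing) auto
      then show "(3::nat)^i \<noteq> k" using k by linarith
    qed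
    moreover have "k \<noteq> 0" using k by simp
    ultimately show "coeff p k = 0" unfolding cf by simp
  qed
  ultimately have "card {x. poly p x = 0} \<le> 3^(n-1)" by (rule card_roots_le)
  moreover have "{y::'a. tr n (a*y) = c} = {x. poly p x = 0}" using ev by auto
  ultimately show ?thesis by simp
qed

lemma roots_N: "card {t::'a. t^(3^m+1) = y} \<le> 3^m+1"
proof -
  define p where "p = monom (1::'a) (3^m+1) - [:y:]"
  have ev: "poly p t = t^(3^m+1) - y" for t unfolding p_def by (simp add: poly_monom)
  have "coeff p (3^m+1) = 1" unfolding p_def by (simp add: coeff_monom)
  then have "p \<noteq> 0" by auto
  moreover have "degree p \<le> 3^m+1" unfolding p_def
    by (rule order.trans[OF degree_diff_le_max]) (simp add: degree_monom_le)
  ultimately have "card {x. poly p x = 0} \<le> 3^m+1" by (rule card_roots_le)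
  moreover have "{t::'a. t^(3^m+1) = y} = {x. poly p x = 0}" using ev by auto
  ultimately show ?thesis by simp
qed

lemma card_subF_le: "card (subF m :: 'a set) \<le> 3^m"
proof -
  define p where "p = monom (1::'a) (3^m) - monom 1 1"
  have ev: "poly p t = t^(3^m) - t" for t unfolding p_def by (simp add: poly_monom)
  have "(3::nat)^m \<ge> 3" using power_increasing[of 1 m "3::nat"] m2 by simp
  then have "(3::nat)^m \<noteq> 1" by linarith
  then have "coeff (monom (1::'a) 1) (3^m) = 0" by (metis coeff_monom)
  then have "coeff p (3^m) = 1" unfolding p_def by (simp add: coeff_monom)
  then have "p \<noteq> 0" by auto
  moreover have "degree p \<le> 3^m" unfolding p_def
    by (rule order.trans[OF degree_diff_le_max]) (auto simp add: degree_monom_le intro: order.trans[OF degree_monom_le])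
  ultimately have "card {x. poly p x = 0} \<le> 3^m" by (rule card_roots_le)
  moreover have "(subF m::'a set) = {x. poly p x = 0}" unfolding subF_def using ev by auto
  ultimately show ?thesis by simp
qed

lemma Q_sq: "(3::nat)^m * 3^m = 3^(2*m)"
  by (simp add: power_add[symmetric] mult_2)

lemma N_fibers:
  shows "card (subF m - {0::'a}) = 3^m - 1"
    and "\<forall>y\<in>subF m - {0::'a}. card {t::'a. t^(3^m+1) = y} = 3^m+1"
proof -
  let ?S = "subF m - {0::'a}"
  let ?f = "\<lambda>y. card {t::'a. t^(3^m+1) = y}"
  have fin: "finite ?S" by simp
  have cS: "card ?S \<le> 3^m - 1"
    using card_subF_le subF_0 by (simp add: card_Diff_singleton)
  have U: "UNIV - {0::'a} = (\<Union>y\<in>?S. {t. t^(3^m+1) = y})"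
    using N_subF by auto
  have "card (UNIV - {0::'a}) = sum ?f ?S"
    unfolding U by (rule card_UN_disjoint) auto
  then have sumf: "sum ?f ?S = 3^(2*m) - 1" using cardA by (simp add: card_Diff_singleton)
  have le: "\<forall>y\<in>?S. ?f y \<le> 3^m+1" using roots_N by auto
  have "sum ?f ?S \<le> card ?S * (3^m+1)"
    using sum_bounded_above[of ?S ?f "3^m+1"] le by (simp add: mult.commute)
  then have "3^(2*m) - 1 \<le> card ?S * (3^m+1)" using sumf by simp
  moreover have "(3^m - 1) * (3^m + 1) = (3::nat)^(2*m) - 1"
    using Q_sq by (simp add: algebra_simps)
  ultimately have "(3^m - 1) * (3^m + 1) \<le> card ?S * (3^m+1)" by simp
  then have "3^m - 1 \<le> card ?S" by (rule mult_right_le_imp_le) simp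
  then show c: "card ?S = 3^m - 1" using cS by simp
  show "\<forall>y\<in>?S. ?f y = 3^m+1"
    by (rule sum_eq_bound[OF fin le]) (use sumf c \<open>(3^m - 1) * (3^m + 1) = (3::nat)^(2*m) - 1\<close> in simp)
qed

lemma card_subF: "card (subF m :: 'a set) = 3^m"
proof -
  have "card (subF m - {0::'a}) = card (subF m :: 'a set) - 1"
    using subF_0 by (simp add: card_Diff_singleton)
  moreover have "subF m \<noteq> ({}::'a set)" using subF_0 by auto
  then have "card (subF m :: 'a set) \<ge> 1" by (simp add: Suc_le_eq card_gt_0_iff)
  moreover have "(3::nat)^m \<ge> 1" by simp
  ultimately show ?thesis using N_fibers(1) by arith
qed

lemma card_F3: "card (F3::'a set) = 3"
proof -
  have "(1::'a) \<noteq> -1" using two_ne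
    by (metis add_eq_0_iff2 one_add_one)
  then show ?thesis unfolding F3_eq by simp
qed

lemma tr_fibers:
  assumes a: "a \<in> subF m" "(a::'a) \<noteq> 0" and c: "c \<in> F3"
  shows "card {y \<in> subF m. tr m (a*y) = c} = 3^(m-1)"
proof -
  let ?f = "\<lambda>c. card {y \<in> subF m. tr m (a*y) = (c::'a)}"
  have le: "\<forall>c\<in>F3. ?f c \<le> 3^(m-1)"
  proof
    fix c :: 'a assume "c \<in> F3"
    have "?f c \<le> card {y::'a. tr m (a*y) = c}" by (rule card_mono) auto
    also have "\<dots> \<le> 3^(m-1)" using roots_tr[of m a c] m2 a by simp
    finally show "?f c \<le> 3^(m-1)" .
  qed
  have U: "subF m = (\<Union>c\<in>F3. {y \<in> subF m. tr m (a*y) = (c::'a)})"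
    using Tm_F3 subF_mult a by blast
  have "card (subF m :: 'a set) = sum ?f F3"
    by (subst U, rule card_UN_disjoint) (auto simp: F3_eq)
  then have s: "sum ?f F3 = 3^m" using card_subF by simp
  have fin: "finite (F3::'a set)" by simp
  have "card (F3::'a set) * 3^(m-1) = 3^m" using card_F3 m2
    by (simp add: power_eq_if)
  then have "\<forall>c\<in>F3. ?f c = 3^(m-1)" using sum_eq_bound[OF fin le] s by simp
  then show ?thesis using c by simp
qed

end

context GF
begin

definition dd :: nat where "dd = 2*3^(2*m-1) - 3^(m-1)"

lemma arith_d: "(3::nat)^(2*m) - 3^(m-1)*(3^m+1) = dd"
proof -
  obtain k where k: "m = Suc k" using m2 by (cases m) auto
  have h1: "(3::nat)^(2*m) = 9*(3^k*3^k)" unfolding k by (simp add: power_add[symmetric] mult_2)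
  have h2: "(3::nat)^(2*m-1) = 3*(3^k*3^k)" unfolding k by (simp add: power_add[symmetric] mult_2)
  have h3: "(3::nat)^m = 3*3^k" unfolding k by simp
  have h4: "(3::nat)^(m-1) = 3^k" unfolding k by simp
  show ?thesis unfolding dd_def h1 h2 h3 h4 by (simp add: algebra_simps)
qed

lemma dd_pos: "dd > 0"
proof -
  have "(3::nat)^(m-1) \<le> 3^(2*m-1)" by (rule power_increasing) auto
  moreover have "0 < (3::nat)^(2*m-1)" by simp
  ultimately show ?thesis unfolding dd_def by linarith
qed

lemma frob_surj: "\<exists>u::'a. u^(3^m) = v"
proof -
  have "inj (\<lambda>u::'a. u^(3^m))"
  proof (rule injI)
    fix u w :: 'a assume "u^(3^m) = w^(3^m)"
    then have "(u - w)^(3^m) = 0" by (simp add: frob_diff)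
    then show "u = w" by simp
  qed
  then have "surj (\<lambda>u::'a. u^(3^m))" by (simp add: finite_UNIV_inj_surj)
  then show ?thesis by (metis surjD)
qed

lemma qq_id: "((t::'a)^(3^m))^(3^m) = t"
proof -
  have "((t::'a)^(3^m))^(3^m) = t^(3^(m+m))" by (simp add: pow3_add)
  then show ?thesis using pow_q by (simp add: mult_2)
qed

lemma pw1: "(x::'a)^(3^m+1) = x^(3^m)*x"
  by (simp only: power_add power_one_right)

lemma shift_id:
  assumes a: "(a::'a) \<in> subF m"
  shows "tr (2*m) (a*(t+u)^(3^m+1)) = tr (2*m) (a*t^(3^m+1)) + tr (2*m) (2*a*u^(3^m)*t) + tr (2*m) (a*u^(3^m+1))"
proof -
  have e1: "(t+u)^(3^m+1) = t^(3^m)*t + t^(3^m)*u + u^(3^m)*t + u^(3^m)*u"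
  proof -
    have h: "(t+u)^(3^m+1) = (t^(3^m)+u^(3^m))*(t+u)" by (simp only: pw1 frob)
    have "(t^(3^m)+u^(3^m))*(t+u) = t^(3^m)*t + t^(3^m)*u + u^(3^m)*t + u^(3^m)*u"
      by (simp add: algebra_simps)
    with h show ?thesis by (rule trans)
  qed
  have aq: "a^(3^m) = a" using a unfolding subF_def by simp
  have "tr (2*m) (a*(t^(3^m)*u)) = tr (2*m) ((a*(t^(3^m)*u))^(3^m))" by (rule T2_frob[symmetric])
  also have "(a*(t^(3^m)*u))^(3^m) = a*(u^(3^m)*t)" by (simp only: power_mult_distrib aq qq_id mult.commute)
  finally have e2: "tr (2*m) (a*(t^(3^m)*u)) = tr (2*m) (a*(u^(3^m)*t))" .
  have "a*(t+u)^(3^m+1) = a*(t^(3^m)*t) + a*(t^(3^m)*u) + a*(u^(3^m)*t) + a*(u^(3^m)*u)"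
    by (simp only: e1 distrib_left)
  then have l: "tr (2*m) (a*(t+u)^(3^m+1)) = tr (2*m) (a*(t^(3^m)*t)) + tr (2*m) (a*(u^(3^m)*t)) + tr (2*m) (a*(u^(3^m)*t)) + tr (2*m) (a*(u^(3^m)*u))"
    by (simp only: tr_add e2)
  have "2*a*u^(3^m)*t = a*(u^(3^m)*t) + a*(u^(3^m)*t)" by algebra
  then have r: "tr (2*m) (2*a*u^(3^m)*t) = tr (2*m) (a*(u^(3^m)*t)) + tr (2*m) (a*(u^(3^m)*t))"
    by (simp only: tr_add)
  show ?thesis unfolding l r by (simp only: pw1 add.assoc)
qed

lemma codeC_F3: "c \<in> codeC m \<Longrightarrow> (c::'a \<Rightarrow> 'a) t \<in> F3"
  unfolding codeC_def using T2_F3 F3_add by auto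

lemma min_word_in_codeC:
  assumes "(a::'a) \<in> subF m" "e \<in> F3"
  shows "(\<lambda>t. tr (2*m) (a*(t+u)^(3^m+1)) + e) \<in> codeC m"
proof -
  have "(\<lambda>t. tr (2*m) (a*(t+u)^(3^m+1)) + e) =
        (\<lambda>t. tr (2*m) (a*t^(3^m+1) + (2*a*u^(3^m))*t) + (tr (2*m) (a*u^(3^m+1)) + e))"
    by (rule ext) (subst shift_id[OF assms(1)], simp add: tr_add mult.assoc)
  moreover have "tr (2*m) (a*u^(3^m+1)) + e \<in> F3" using T2_F3 assms(2) F3_add by blast
  ultimately show ?thesis unfolding codeC_def using assms(1) by blast
qed

lemma card_shift: "card {t::'a. P (t+u)} = card {s. P s}"
  by (rule bij_betw_same_card[of "\<lambda>t. t+u"])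
     (auto simp: bij_betw_def inj_on_def image_def intro!: exI[where x="_ - u"])

lemma hweight_compl: "hweight (c::'a \<Rightarrow> 'a) = 3^(2*m) - card {t. c t = 0}"
proof -
  have "{t. c t \<noteq> 0} = UNIV - {t. c t = 0}" by auto
  then show ?thesis unfolding hweight_def using cardA by (simp add: card_Diff_subset)
qed

lemma T2N_eq: "(a::'a) \<in> subF m \<Longrightarrow> tr (2*m) (a*s^(3^m+1)) = tr m (2*a*s^(3^m+1))"
proof -
  assume a: "a \<in> subF m"
  have "a*s^(3^m+1) \<in> subF m" using a N_subF subF_mult by blast
  then have "tr (2*m) (a*s^(3^m+1)) = 2 * tr m (a*s^(3^m+1))" by (rule T2_sub)
  also have "\<dots> = tr m (2*(a*s^(3^m+1)))" using tr_scal[OF F3_2] by simp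
  finally show ?thesis by (simp add: mult.assoc)
qed

lemma weight_exact:
  assumes a: "(a::'a) \<in> subF m" "a \<noteq> 0" and e: "e \<in> F3" "e \<noteq> 0"
  shows "hweight (\<lambda>t. tr (2*m) (a*(t+u)^(3^m+1)) + e) = dd"
proof -
  let ?Y = "{y \<in> subF m. tr m ((2*a)*y) = -e}"
  have Z: "card {t. tr (2*m) (a*(t+u)^(3^m+1)) + e = 0} = card {s. tr (2*m) (a*s^(3^m+1)) + e = 0}"
    by (rule card_shift[where P="\<lambda>s. tr (2*m) (a*s^(3^m+1)) + e = 0"])
  have U: "{s. tr (2*m) (a*s^(3^m+1)) + e = 0} = (\<Union>y\<in>?Y. {s. s^(3^m+1) = y})"
    using T2N_eq[OF a(1)] N_subF by (auto simp: mult.assoc add_eq_0_iff2)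
  have Ysub: "?Y \<subseteq> subF m - {0}"
    using e(2) by (auto simp: tr_zero)
  have "card (\<Union>y\<in>?Y. {s::'a. s^(3^m+1) = y}) = (\<Sum>y\<in>?Y. card {s::'a. s^(3^m+1) = y})"
    by (rule card_UN_disjoint) auto
  also have "\<dots> = (\<Sum>y\<in>?Y. 3^m+1)"
    using N_fibers(2) Ysub by (intro sum.cong) auto
  also have "\<dots> = card ?Y * (3^m+1)" by simp
  also have "card ?Y = 3^(m-1)"
    by (rule tr_fibers) (use a two_ne subF_mult F3_subF F3_2 F3_neg e(1) in auto)
  finally have c: "card {t. tr (2*m) (a*(t+u)^(3^m+1)) + e = 0} = 3^(m-1)*(3^m+1)"
    using Z U by simp
  show ?thesis by (simp only: hweight_compl c arith_d)
qed

lemma weight_lb: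
  assumes c: "c \<in> codeC m" "c \<noteq> (\<lambda>_. (0::'a))"
  shows "dd \<le> hweight c"
proof -
  obtain a b h where cdef: "c = (\<lambda>t. tr (2*m) (a * t^(3^m+1) + b*t) + h)"
    and a: "a \<in> subF m" and h: "h \<in> F3"
    using c(1) unfolding codeC_def by blast
  let ?B = "3^(m-1)*(3^m+1) :: nat"
  have "card {t. c t = 0} \<le> ?B"
  proof (cases "a = 0")
    case True
    show ?thesis
    proof (cases "b = 0")
      case True
      with \<open>a = 0\<close> have "c = (\<lambda>_. h)" unfolding cdef by (simp add: tr_zero)
      then have "h \<noteq> 0" using c(2) by auto
      then have "{t. c t = 0} = {}" using \<open>c = (\<lambda>_. h)\<close> by auto
      then show ?thesis by simp
    next
      case False
      have "{t. c t = 0} = {t. tr (2*m) (b*t) = -h}"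
        unfolding cdef \<open>a = 0\<close> by (auto simp: add_eq_0_iff2)
      then have "card {t. c t = 0} \<le> 3^(2*m-1)" using roots_tr[of "2*m" b "-h"] False m2 by simp
      also have "(3::nat)^(2*m-1) = 3^(m-1)*3^m"
        using m2 by (simp add: power_add[symmetric])
      also have "\<dots> \<le> ?B" by simp
      finally show ?thesis .
    qed
  next
    case False
    obtain u where u: "u^(3^m) = b/(2*a)" using frob_surj by blast
    have b: "b = 2*a*u^(3^m)" using u False two_ne by (simp add: field_simps)
    define e where "e = h - tr (2*m) (a*u^(3^m+1))"
    have ct: "c t = tr (2*m) (a*(t+u)^(3^m+1)) + e" for t
      unfolding cdef e_def shift_id[OF a] b by (simp add: tr_add mult.assoc)
    have "card {t. c t = 0} = card {t. tr (2*m) (a*(t+u)^(3^m+1)) + e = 0}" using ct by simp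
    also have "\<dots> = card {s. tr (2*m) (a*s^(3^m+1)) + e = 0}"
      by (rule card_shift[where P="\<lambda>s. tr (2*m) (a*s^(3^m+1)) + e = 0"])
    also have "\<dots> \<le> card (\<Union>y\<in>{y. tr m ((2*a)*y) = -e}. {s. s^(3^m+1) = y})"
      by (rule card_mono) (use T2N_eq[OF a] in \<open>auto simp: mult.assoc add_eq_0_iff2\<close>)
    also have "\<dots> \<le> (\<Sum>y\<in>{y. tr m ((2*a)*y) = -e}. card {s::'a. s^(3^m+1) = y})"
      by (rule card_UN_le) simp
    also have "\<dots> \<le> (\<Sum>y\<in>{y::'a. tr m ((2*a)*y) = -e}. 3^m+1)"
      by (rule sum_mono) (rule roots_N)
    also have "\<dots> = card {y::'a. tr m ((2*a)*y) = -e} * (3^m+1)" by simp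
    also have "\<dots> \<le> ?B"
    proof -
      have "card {y::'a. tr m ((2*a)*y) = -e} \<le> 3^(m-1)"
        by (rule roots_tr) (use m2 False two_ne in auto)
      then show ?thesis by (rule mult_right_mono) simp
    qed
    finally show ?thesis .
  qed
  then show ?thesis unfolding hweight_compl arith_d[symmetric] by simp
qed

lemma dmin_eq: "dmin m TYPE('a) = dd"
proof -
  let ?A = "{hweight c | c :: 'a \<Rightarrow> 'a. c \<in> codeC m \<and> c \<noteq> (\<lambda>_. 0)}"
  let ?c0 = "\<lambda>t::'a. tr (2*m) (1*(t+0)^(3^m+1)) + 1"
  have w0: "hweight ?c0 = dd" by (rule weight_exact) (auto simp: subF_1 F3_1)
  have "?c0 \<noteq> (\<lambda>_. 0)"
  proof
    assume "?c0 = (\<lambda>_. 0)"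
    then have "hweight ?c0 = 0" by (subst \<open>?c0 = (\<lambda>_. 0)\<close>) (simp add: hweight_def)
    then show False using w0 dd_pos by simp
  qed
  moreover have "?c0 \<in> codeC m" by (rule min_word_in_codeC) (auto simp: subF_1 F3_1)
  ultimately have "dd \<in> ?A" using w0 by force
  moreover have "finite ?A" by simp
  moreover have "\<forall>y\<in>?A. dd \<le> y" using weight_lb by blast
  ultimately have "Min ?A = dd" by (intro Min_eqI) auto
  then show ?thesis unfolding dmin_def by simp
qed

lemma blocksD_eq: "(blocksD m :: 'a set set) = {supp c | c. c \<in> codeC m \<and> hweight c = dd}"
  unfolding blocksD_def dmin_eq by simp

end

lemma F3g_add: assumes "x \<in> F3" "y \<in> F3" shows "(x::'b::field) + y \<in> F3"
proof -
  obtain i j where "x = of_int i" "y = of_int j" using assms unfolding F3_def by auto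
  then have "x + y = of_int (i+j)" by simp
  then show ?thesis unfolding F3_def by blast
qed
lemma F3g_mult: assumes "x \<in> F3" "y \<in> F3" shows "(x::'b::field) * y \<in> F3"
proof -
  obtain i j where "x = of_int i" "y = of_int j" using assms unfolding F3_def by auto
  then have "x * y = of_int (i*j)" by simp
  then show ?thesis unfolding F3_def by blast
qed
lemma F3g_1: "(1::'b::field) \<in> F3"
proof -
  have "(1::'b) = of_int 1" by simp
  then show ?thesis unfolding F3_def by blast
qed
lemma F3g_0: "(0::'b::field) \<in> F3"
proof -
  have "(0::'b) = of_int 0" by simp
  then show ?thesis unfolding F3_def by blast
qed

lemma span_intro: "finite V \<Longrightarrow> V \<subseteq> S \<Longrightarrow> \<forall>v\<in>V. k v \<in> F3 \<Longrightarrow>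
   (\<lambda>t. \<Sum>v\<in>V. k v * v t) \<in> span3 (S :: ('a \<Rightarrow> 'b::field) set)"
  unfolding span3_def by blast

lemma span_gen: "v \<in> S \<Longrightarrow> v \<in> span3 (S :: ('a \<Rightarrow> 'b::field) set)"
  unfolding span3_def
  by (rule CollectI, rule exI[where x="{v}"], rule exI[where x="\<lambda>_. 1"]) (auto simp: F3g_1)

lemma span_0: "(\<lambda>_. 0) \<in> span3 (S :: ('a \<Rightarrow> 'b::field) set)"
  unfolding span3_def
  by (rule CollectI, rule exI[where x="{}"], rule exI[where x="\<lambda>_. 1"]) auto

lemma span_add:
  assumes "f \<in> span3 S" "g \<in> span3 (S :: ('a \<Rightarrow> 'b::field) set)"
  shows "(\<lambda>t. f t + g t) \<in> span3 S"
proof -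
  obtain V1 k1 where f: "f = (\<lambda>t. \<Sum>v\<in>V1. k1 v * v t)" "finite V1" "V1 \<subseteq> S" "\<forall>v\<in>V1. k1 v \<in> F3"
    using assms(1) unfolding span3_def by blast
  obtain V2 k2 where g: "g = (\<lambda>t. \<Sum>v\<in>V2. k2 v * v t)" "finite V2" "V2 \<subseteq> S" "\<forall>v\<in>V2. k2 v \<in> F3"
    using assms(2) unfolding span3_def by blast
  define k where "k v = (if v \<in> V1 then k1 v else 0) + (if v \<in> V2 then k2 v else 0)" for v
  have fin: "finite (V1 \<union> V2)" using f g by simp
  have "(\<lambda>t. f t + g t) = (\<lambda>t. \<Sum>v\<in>V1 \<union> V2. k v * v t)"
  proof
    fix t
    have e0: "(\<Sum>v\<in>V1 \<union> V2. k v * v t) = (\<Sum>v\<in>V1 \<union> V2. (if v \<in> V1 then k1 v * v t else 0)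
        + (if v \<in> V2 then k2 v * v t else 0))"
      unfolding k_def by (rule sum.cong[OF refl]) (simp add: distrib_right)
    have e1: "(\<Sum>v\<in>V1 \<union> V2. (if v \<in> V1 then k1 v * v t else 0) + (if v \<in> V2 then k2 v * v t else 0))
       = (\<Sum>v\<in>V1 \<union> V2. if v \<in> V1 then k1 v * v t else 0)
        + (\<Sum>v\<in>V1 \<union> V2. if v \<in> V2 then k2 v * v t else 0)"
      by (rule sum.distrib)
    have e2: "(\<Sum>v\<in>V1 \<union> V2. if v \<in> V1 then k1 v * v t else 0) = (\<Sum>v\<in>V1. if v \<in> V1 then k1 v * v t else 0)"
      by (rule sum.mono_neutral_right) (use fin in simp_all)
    have e3: "(\<Sum>v\<in>V1. if v \<in> V1 then k1 v * v t else 0) = (\<Sum>v\<in>V1. k1 v * v t)"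
      by (rule sum.cong) auto
    have e4: "(\<Sum>v\<in>V1 \<union> V2. if v \<in> V2 then k2 v * v t else 0) = (\<Sum>v\<in>V2. if v \<in> V2 then k2 v * v t else 0)"
      by (rule sum.mono_neutral_right) (use fin in simp_all)
    have e5: "(\<Sum>v\<in>V2. if v \<in> V2 then k2 v * v t else 0) = (\<Sum>v\<in>V2. k2 v * v t)"
      by (rule sum.cong) auto
    show "f t + g t = (\<Sum>v\<in>V1 \<union> V2. k v * v t)"
      unfolding f(1) g(1) e0 e1 e2 e3 e4 e5 ..
  qed
  moreover have "\<forall>v\<in>V1 \<union> V2. k v \<in> F3"
    using f(4) g(4) unfolding k_def by (auto intro!: F3g_add simp: F3g_0)
  moreover have "V1 \<union> V2 \<subseteq> S" using f(3) g(3) by blast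
  ultimately show ?thesis using span_intro[OF fin, of S k] by simp
qed

lemma span_scal:
  assumes "f \<in> span3 (S :: ('a \<Rightarrow> 'b::field) set)" "c \<in> F3"
  shows "(\<lambda>t. c * f t) \<in> span3 S"
proof -
  obtain V k where f: "f = (\<lambda>t. \<Sum>v\<in>V. k v * v t)" "finite V" "V \<subseteq> S" "\<forall>v\<in>V. k v \<in> F3"
    using assms(1) unfolding span3_def by blast
  have "(\<lambda>t. c * f t) = (\<lambda>t. \<Sum>v\<in>V. (\<lambda>v. c * k v) v * v t)"
    unfolding f by (simp add: sum_distrib_left mult.assoc)
  moreover have "\<forall>v\<in>V. (\<lambda>v. c * k v) v \<in> F3" using f(4) assms(2) F3g_mult by blast
  ultimately show ?thesis using span_intro[OF f(2,3)] by metis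
qed

lemma span_sum:
  assumes "finite A" "\<forall>x\<in>A. (\<lambda>t. f x t) \<in> span3 (S :: ('a \<Rightarrow> 'b::field) set)"
  shows "(\<lambda>t. \<Sum>x\<in>A. f x t) \<in> span3 S"
  using assms
proof (induction A rule: finite_induct)
  case empty then show ?case using span_0 by simp
next
  case (insert x F)
  then show ?case using span_add[of "\<lambda>t. f x t" S "\<lambda>t. \<Sum>x\<in>F. f x t"] by simp
qed

lemma span_list:
  assumes "\<forall>p\<in>set xs. fst p \<in> F3 \<and> snd p \<in> span3 (S :: ('a \<Rightarrow> 'b::field) set)"
  shows "(\<lambda>t. \<Sum>p\<leftarrow>xs. fst p * snd p t) \<in> span3 S"
  using assms
proof (induction xs)
  case Nil then show ?case using span_0 by simp
next
  case (Cons p xs)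
  then show ?case using span_add[OF span_scal[of "snd p" S "fst p"]] by simp
qed

lemma span_eq: "f \<in> span3 S \<Longrightarrow> (\<And>t. g t = f t) \<Longrightarrow> g \<in> span3 S"
  by (metis ext)

context GF
begin

abbreviation GG :: "('a::{field,finite} \<Rightarrow> 'a) set" where "GG \<equiv> codeCD m"

lemma G_list:
  assumes "\<forall>p\<in>set xs. fst p \<in> F3 \<and> snd p \<in> GG" "\<And>t. f t = (\<Sum>p\<leftarrow>xs. fst p * snd p t)"
  shows "f \<in> GG"
  using span_eq[OF span_list[OF assms(1)[unfolded codeCD_def]] assms(2)] unfolding codeCD_def .

lemma G_0: "(\<lambda>_. 0) \<in> GG" unfolding codeCD_def by (rule span_0)

lemma G_sum: "finite A \<Longrightarrow> \<forall>x\<in>A. (\<lambda>t. f x t) \<in> GG \<Longrightarrow> (\<lambda>t. \<Sum>x\<in>A. f x t) \<in> GG"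
  unfolding codeCD_def by (rule span_sum)

lemma incvec_sq:
  fixes c :: "'a::{field,finite} \<Rightarrow> 'a"
  shows "(\<forall>t. c t \<in> F3) \<Longrightarrow> incvec (supp c) = (\<lambda>t. (c t)^2)"
  unfolding incvec_def supp_def using F3_sq by fastforce

lemma sqword_in_G: "c \<in> codeC m \<Longrightarrow> hweight c = dd \<Longrightarrow> (\<lambda>t. (c t)^2) \<in> GG"
proof -
  assume c: "c \<in> codeC m" "hweight c = dd"
  then have "supp c \<in> blocksD m" using blocksD_eq by blast
  then have "incvec (supp c) \<in> incvec ` blocksD m" by blast
  then have "incvec (supp c) \<in> GG" unfolding codeCD_def by (rule span_gen)
  then show ?thesis using incvec_sq codeC_F3[OF c(1)] by metis
qed

definition gg :: "'a::{field,finite} \<Rightarrow> 'a \<Rightarrow> 'a \<Rightarrow> 'a" where "gg a u t = tr (2*m) (a*(t+u)^(3^m+1))"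
definition AA :: "'a::{field,finite} \<Rightarrow> 'a \<Rightarrow> 'a" where "AA a t = tr (2*m) (a*t^(3^m+1))"
definition LL :: "'a::{field,finite} \<Rightarrow> 'a \<Rightarrow> 'a" where "LL v t = tr (2*m) (v*t)"

lemma gg_split: "a \<in> subF m \<Longrightarrow> gg a u t = AA a t + LL (2*a*u^(3^m)) t + tr (2*m) (a*u^(3^m+1))"
  unfolding gg_def AA_def LL_def by (rule shift_id)

lemma G1:
  assumes a: "a \<in> subF m" "a \<noteq> 0"
  shows "gg a u \<in> GG" "(\<lambda>t. (gg a u t)^2 + 1) \<in> GG"
proof -
  have w: "(\<lambda>t. (gg a u t + e)^2) \<in> GG" if "e \<in> F3" "e \<noteq> 0" for e
    unfolding gg_def
    by (rule sqword_in_G[OF min_word_in_codeC[OF a(1) that(1)] weight_exact[OF a that]])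
  have s1: "(\<lambda>t. (gg a u t + 1)^2) \<in> GG" using w[of 1] F3_1 by simp
  have s2: "(\<lambda>t. (gg a u t + -1)^2) \<in> GG" using w[of "-1"] F3_m1 by simp
  show "gg a u \<in> GG"
  proof (rule G_list[of "[(1, \<lambda>t. (gg a u t + 1)^2), (-1, \<lambda>t. (gg a u t + -1)^2)]"])
    show "\<forall>p\<in>set [(1::'a, \<lambda>t. (gg a u t + 1)^2), (-1, \<lambda>t. (gg a u t + -1)^2)]. fst p \<in> F3 \<and> snd p \<in> GG"
      using s1 s2 F3_1 F3_m1 by auto
    fix t
    show "gg a u t = (\<Sum>p\<leftarrow>[(1::'a, \<lambda>t. (gg a u t + 1)^2), (-1, \<lambda>t. (gg a u t + -1)^2)]. fst p * snd p t)"
      by (simp, rule sym, rule mod3[where z="gg a u t"]) algebra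
  qed
  show "(\<lambda>t. (gg a u t)^2 + 1) \<in> GG"
  proof (rule G_list[of "[(2, \<lambda>t. (gg a u t + 1)^2), (2, \<lambda>t. (gg a u t + -1)^2)]"])
    show "\<forall>p\<in>set [(2::'a, \<lambda>t. (gg a u t + 1)^2), (2, \<lambda>t. (gg a u t + -1)^2)]. fst p \<in> F3 \<and> snd p \<in> GG"
      using s1 s2 F3_2 by auto
    fix t
    show "(gg a u t)^2 + 1 = (\<Sum>p\<leftarrow>[(2::'a, \<lambda>t. (gg a u t + 1)^2), (2, \<lambda>t. (gg a u t + -1)^2)]. fst p * snd p t)"
      by (simp, rule sym, rule mod3[where z="(gg a u t)^2 + 1"]) algebra
  qed
qed

end

context GF
begin

lemma G_one: "(\<lambda>_. 1) \<in> GG"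
proof -
  have "card {y\<in>subF m. tr m (1*y) = (1::'a)} = 3^(m-1)" by (rule tr_fibers) (auto simp: subF_1 F3_1)
  then have "{y\<in>subF m. tr m (1*y) = (1::'a)} \<noteq> {}" by (metis card.empty power_not_zero zero_neq_numeral)
  then obtain y where y: "y \<in> subF m" "tr m y = (1::'a)" by auto
  have y0: "y \<noteq> 0" using y(2) tr_zero by auto
  have "card {t::'a. t^(3^m+1) = y} = 3^m+1" using N_fibers(2) y y0 by auto
  then have "{t::'a. t^(3^m+1) = y} \<noteq> {}" by (metis card.empty add_is_0 one_neq_zero)
  then obtain u where u: "u^(3^m+1) = y" by auto
  have T2y: "tr (2*m) (1*u^(3^m+1)) = 2" using T2_sub[OF y(1)] y(2) u by simp
  have s1: "gg 1 u t = AA 1 t + LL (2*1*u^(3^m)) t + 2" for t using gg_split[OF subF_1, of u t] T2y by simp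
  have nq: "(-u)^(3^m) = -(u^(3^m))" by (rule frob_neg)
  have nq1: "(-u)^(3^m+1) = u^(3^m+1)" unfolding pw1 nq by simp
  have nL: "LL (2*1*(-u)^(3^m)) t = - LL (2*1*u^(3^m)) t" for t
    unfolding LL_def nq using tr_neg by (metis minus_mult_left minus_mult_right)
  have s2: "gg 1 (-u) t = AA 1 t - LL (2*1*u^(3^m)) t + 2" for t
    using gg_split[OF subF_1, of "-u" t] T2y nq1 nL[of t] by simp
  have s3: "gg 1 0 t = AA 1 t" for t unfolding gg_def AA_def by simp
  show ?thesis
  proof (rule G_list[of "[(1, gg 1 u), (1, gg 1 (-u)), (1, gg 1 0)]"])
    show "\<forall>p\<in>set [(1::'a, gg 1 u), (1, gg 1 (-u)), (1, gg 1 0)]. fst p \<in> F3 \<and> snd p \<in> GG"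
      using G1(1)[OF subF_1] F3_1 by auto
    fix t
    show "1 = (\<Sum>p\<leftarrow>[(1::'a, gg 1 u), (1, gg 1 (-u)), (1, gg 1 0)]. fst p * snd p t)"
      unfolding s1 s2 s3 by (simp only: list.map prod.sel sum_list_simps, rule sym, rule mod3[where z="AA 1 t + 1"]) algebra
  qed
qed

lemma G_L: "LL v \<in> GG"
proof -
  obtain u where u: "u^(3^m) = v/2" using frob_surj by blast
  have e: "2*1*u^(3^m) = v" using u two_ne by (simp add: field_simps)
  define c where "c = tr (2*m) (1*u^(3^m+1))"
  have s1: "gg 1 u t = AA 1 t + LL v t + c" for t using gg_split[OF subF_1, of u t] e unfolding c_def by simp
  have s3: "gg 1 0 t = AA 1 t" for t unfolding gg_def AA_def by simp
  show ?thesis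
  proof (rule G_list[of "[(1, gg 1 u), (-1, gg 1 0), (-c, \<lambda>_. 1)]"])
    show "\<forall>p\<in>set [(1::'a, gg 1 u), (-1, gg 1 0), (-c, \<lambda>_. 1)]. fst p \<in> F3 \<and> snd p \<in> GG"
      using G1(1)[OF subF_1] F3_1 F3_m1 G_one F3_neg T2_F3 unfolding c_def by auto
    fix t
    show "LL v t = (\<Sum>p\<leftarrow>[(1::'a, gg 1 u), (-1, gg 1 0), (-c, \<lambda>_. 1)]. fst p * snd p t)"
      unfolding s1 s3 by simp
  qed
qed

lemma AA_0: "AA 0 = (\<lambda>_. 0)"
  unfolding AA_def by (simp add: tr_zero)

lemma G_A:
  assumes a: "a \<in> subF m"
  shows "AA a \<in> GG" "(\<lambda>t. (AA a t)^2) \<in> GG"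
proof -
  have "AA a \<in> GG \<and> (\<lambda>t. (AA a t)^2) \<in> GG"
  proof (cases "a = 0")
    case True then show ?thesis using G_0 by (simp add: AA_0)
  next
    case False
    have s: "AA a t = gg a 0 t" for t unfolding gg_def AA_def by simp
    have "AA a = gg a 0" using s by auto
    then have "AA a \<in> GG" using G1(1)[OF a False] by simp
    moreover have "(\<lambda>t. (AA a t)^2) \<in> GG"
    proof (rule G_list[of "[(1, \<lambda>t. (gg a 0 t)^2 + 1), (-1, \<lambda>_. 1)]"])
      show "\<forall>p\<in>set [(1::'a, \<lambda>t. (gg a 0 t)^2 + 1), (-1, \<lambda>_. 1)]. fst p \<in> F3 \<and> snd p \<in> GG"
        using G1(2)[OF a False] G_one F3_1 F3_m1 by auto
      fix t show "(AA a t)^2 = (\<Sum>p\<leftarrow>[(1::'a, \<lambda>t. (gg a 0 t)^2 + 1), (-1, \<lambda>_. 1)]. fst p * snd p t)"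
        unfolding s by simp
    qed
    ultimately show ?thesis by simp
  qed
  then show "AA a \<in> GG" "(\<lambda>t. (AA a t)^2) \<in> GG" by auto
qed

lemma G_h:
  assumes a: "a \<in> subF m" "a \<noteq> 0"
  shows "(\<lambda>t. (LL (2*a*u^(3^m)) t)^2 + 2 * AA a t * LL (2*a*u^(3^m)) t) \<in> GG"
proof -
  define c where "c = tr (2*m) (a*u^(3^m+1))"
  have cF: "c \<in> F3" unfolding c_def by (rule T2_F3)
  have s: "gg a u t = AA a t + LL (2*a*u^(3^m)) t + c" for t using gg_split[OF a(1)] unfolding c_def by simp
  let ?xs = "[(1::'a, \<lambda>t. (gg a u t)^2 + 1), (-1, \<lambda>t. (AA a t)^2), (-2*c, AA a), (-2*c, LL (2*a*u^(3^m))), (-(c^2+1), \<lambda>_. 1)]"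
  show ?thesis
  proof (rule G_list[of ?xs])
    have "-2*c \<in> F3" using cF F3_neg F3_2 F3_mult by (metis mult_minus_left)
    moreover have "-(c^2+1) \<in> F3" using cF F3_neg F3_1 F3_mult F3_add by (metis power2_eq_square)
    ultimately show "\<forall>p\<in>set ?xs. fst p \<in> F3 \<and> snd p \<in> GG"
      using G1(2)[OF a] G_A[OF a(1)] G_L G_one F3_1 F3_m1 by auto
    fix t
    show "(LL (2*a*u^(3^m)) t)^2 + 2 * AA a t * LL (2*a*u^(3^m)) t = (\<Sum>p\<leftarrow>?xs. fst p * snd p t)"
      unfolding s by simp algebra
  qed
qed

lemma LL_neg: "LL (-v) t = - LL v t"
  unfolding LL_def using tr_neg by simp

lemma LL_add: "LL (v+w) t = LL v t + LL w t"
  unfolding LL_def by (simp add: tr_add distrib_right)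

lemma LL_diff: "LL (v-w) t = LL v t - LL w t"
  unfolding LL_def by (simp add: tr_diff left_diff_distrib)

lemma AA_add: "AA (a+b) t = AA a t + AA b t"
  unfolding AA_def by (simp add: tr_add distrib_right)

lemma AA_diff: "AA (a-b) t = AA a t - AA b t"
  unfolding AA_def by (simp add: tr_diff left_diff_distrib)

lemma G_L2_AL:
  assumes a: "a \<in> subF m" "a \<noteq> 0"
  shows "(\<lambda>t. (LL v t)^2) \<in> GG" "(\<lambda>t. AA a t * LL v t) \<in> GG"
proof -
  obtain u where u: "u^(3^m) = v/(2*a)" using frob_surj by blast
  have e1: "2*a*u^(3^m) = v" using u two_ne a(2) by (simp add: field_simps)
  have e2: "2*a*(-u)^(3^m) = -v" using e1 frob_neg by simp
  have h1: "(\<lambda>t. (LL v t)^2 + 2 * AA a t * LL v t) \<in> GG" using G_h[OF a, of u] unfolding e1 .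
  have h2: "(\<lambda>t. (LL (-v) t)^2 + 2 * AA a t * LL (-v) t) \<in> GG" using G_h[OF a, of "-u"] unfolding e2 .
  let ?h1 = "\<lambda>t. (LL v t)^2 + 2 * AA a t * LL v t"
  let ?h2 = "\<lambda>t. (LL (-v) t)^2 + 2 * AA a t * LL (-v) t"
  show "(\<lambda>t. (LL v t)^2) \<in> GG"
  proof (rule G_list[of "[(2, ?h1), (2, ?h2)]"])
    show "\<forall>p\<in>set [(2::'a, ?h1), (2, ?h2)]. fst p \<in> F3 \<and> snd p \<in> GG" using h1 h2 F3_2 by auto
    fix t show "(LL v t)^2 = (\<Sum>p\<leftarrow>[(2::'a, ?h1), (2, ?h2)]. fst p * snd p t)"
      unfolding LL_neg by (simp only: list.map prod.sel sum_list_simps, rule sym, rule mod3[where z="(LL v t)^2"]) algebra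
  qed
  show "(\<lambda>t. AA a t * LL v t) \<in> GG"
  proof (rule G_list[of "[(1, ?h1), (-1, ?h2)]"])
    show "\<forall>p\<in>set [(1::'a, ?h1), (-1, ?h2)]. fst p \<in> F3 \<and> snd p \<in> GG" using h1 h2 F3_1 F3_m1 by auto
    fix t show "AA a t * LL v t = (\<Sum>p\<leftarrow>[(1::'a, ?h1), (-1, ?h2)]. fst p * snd p t)"
      unfolding LL_neg by (simp only: list.map prod.sel sum_list_simps, rule sym, rule mod3[where z="AA a t * LL v t"]) algebra
  qed
qed

lemma G_L2: "(\<lambda>t. (LL v t)^2) \<in> GG"
  using G_L2_AL(1)[OF subF_1] by simp

lemma G_AL: "a \<in> subF m \<Longrightarrow> (\<lambda>t. AA a t * LL v t) \<in> GG"
  using G_L2_AL(2) G_0 by (cases "a = 0") (auto simp: AA_0)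

lemma G_LL: "(\<lambda>t. LL v t * LL w t) \<in> GG"
proof (rule G_list[of "[(1, \<lambda>t. (LL (v+w) t)^2), (-1, \<lambda>t. (LL (v-w) t)^2)]"])
  show "\<forall>p\<in>set [(1::'a, \<lambda>t. (LL (v+w) t)^2), (-1, \<lambda>t. (LL (v-w) t)^2)]. fst p \<in> F3 \<and> snd p \<in> GG"
    using G_L2 F3_1 F3_m1 by auto
  fix t show "LL v t * LL w t = (\<Sum>p\<leftarrow>[(1::'a, \<lambda>t. (LL (v+w) t)^2), (-1, \<lambda>t. (LL (v-w) t)^2)]. fst p * snd p t)"
    unfolding LL_add LL_diff by (simp only: list.map prod.sel sum_list_simps, rule sym, rule mod3[where z="LL v t * LL w t"]) algebra
qed

lemma G_AA: "a \<in> subF m \<Longrightarrow> b \<in> subF m \<Longrightarrow> (\<lambda>t. AA a t * AA b t) \<in> GG"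
proof (rule G_list[of "[(1, \<lambda>t. (AA (a+b) t)^2), (-1, \<lambda>t. (AA (a-b) t)^2)]"])
  assume ab: "a \<in> subF m" "b \<in> subF m"
  show "\<forall>p\<in>set [(1::'a, \<lambda>t. (AA (a+b) t)^2), (-1, \<lambda>t. (AA (a-b) t)^2)]. fst p \<in> F3 \<and> snd p \<in> GG"
    using G_A(2)[OF subF_add[OF ab]] G_A(2)[OF subF_diff[OF ab]] F3_1 F3_m1 by auto
  fix t show "AA a t * AA b t = (\<Sum>p\<leftarrow>[(1::'a, \<lambda>t. (AA (a+b) t)^2), (-1, \<lambda>t. (AA (a-b) t)^2)]. fst p * snd p t)"
    unfolding AA_add AA_diff by (simp only: list.map prod.sel sum_list_simps, rule sym, rule mod3[where z="AA a t * AA b t"]) algebra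
qed

end

lemma exp_range:
  fixes n k j :: nat assumes "k < n" "j < n"
  shows "0 < (3::nat)^n - 1 - 3^k + 3^j" "(3::nat)^n - 1 - 3^k + 3^j < 2*(3^n - 1)"
    "((3::nat)^n - 1 - 3^k + 3^j = 3^n - 1) = (j = k)"
proof -
  have k: "(3::nat)^k < 3^n" "1 \<le> (3::nat)^k" using assms by (simp_all add: power_strict_increasing)
  have j: "(3::nat)^j < 3^n" "1 \<le> (3::nat)^j" using assms by (simp_all add: power_strict_increasing)
  show "0 < (3::nat)^n - 1 - 3^k + 3^j" using k j by arith
  show "(3::nat)^n - 1 - 3^k + 3^j < 2*(3^n - 1)" using k j by arith
  have "((3::nat)^n - 1 - 3^k + 3^j = 3^n - 1) = ((3::nat)^j = 3^k)" using k j by arith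
  then show "((3::nat)^n - 1 - 3^k + 3^j = 3^n - 1) = (j = k)" by simp
qed

context GF
begin

lemma PROD:
  assumes x: "(x::'a)^(3^n) = x" and y: "y^(3^n) = y"
  shows "tr n x * tr n y = (\<Sum>j<n. tr n (x * y^(3^j)))"
proof -
  have "tr n x * tr n y = (\<Sum>i<n. x^(3^i) * tr n y)" unfolding tr_def[of n x] by (rule sum_distrib_right)
  also have "\<dots> = (\<Sum>i<n. \<Sum>j<n. (x * y^(3^j))^(3^i))"
  proof (rule sum.cong[OF refl])
    fix i assume "i \<in> {..<n}"
    have "tr n y = tr n (y^(3^i))" using tr_frob[OF y, where j=i] by simp
    also have "\<dots> = (\<Sum>j<n. (y^(3^j))^(3^i))" unfolding tr_def by (rule sum.cong[OF refl]) (rule pow_pow_comm)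
    finally have "tr n y = (\<Sum>j<n. (y^(3^j))^(3^i))" .
    then show "x^(3^i) * tr n y = (\<Sum>j<n. (x * y^(3^j))^(3^i))" by (simp add: sum_distrib_left power_mult_distrib)
  qed
  also have "\<dots> = (\<Sum>j<n. \<Sum>i<n. (x * y^(3^j))^(3^i))" by (rule sum.swap)
  also have "\<dots> = (\<Sum>j<n. tr n (x * y^(3^j)))" unfolding tr_def ..
  finally show ?thesis .
qed

lemma pow_sum_gen:
  fixes K :: "'a set"
  assumes fin: "finite K" and K0: "0 \<in> K" and Kmul: "\<forall>c\<in>K-{0}. \<forall>x\<in>K. c*x \<in> K \<and> x/c \<in> K"
    and Kpow: "\<forall>w\<in>K-{0}. w^(card K - 1) = 1" and Kch: "of_nat (card K) = (0::'a)" and K2: "card K \<ge> 2"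
    and e: "0 < e" "e < 2*(card K - 1)"
  shows "(\<Sum>w\<in>K. w^e) = (if e = card K - 1 then -1 else 0)"
proof (cases "e = card K - 1")
  case True
  have "(\<Sum>w\<in>K. w^e) = 0^e + (\<Sum>w\<in>K-{0}. w^e)" using fin K0 by (rule sum.remove)
  also have "\<dots> = (\<Sum>w\<in>K-{0}. 1)" using Kpow True e(1) by simp
  also have "\<dots> = of_nat (card K - 1)" using fin K0 by (simp add: card_Diff_singleton)
  also have "\<dots> = of_nat (card K) - 1" using K2 by (simp add: of_nat_diff)
  also have "\<dots> = -1" using Kch by simp
  finally show ?thesis using True by simp
next
  case False
  let ?n = "card K - 1"
  define e' where "e' = (if e < ?n then e else e - ?n)"
  have e'pos: "0 < e'" "e' < ?n" using e False unfolding e'_def by auto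
  have pe: "w^e = w^e'" if "w \<in> K" for w
  proof (cases "w = 0")
    case True then show ?thesis using e(1) e'pos by (simp add: power_0_left)
  next
    case w0: False
    show ?thesis
    proof (cases "e < ?n")
      case True then show ?thesis unfolding e'_def by simp
    next
      case ge: False
      then have "e = e' + ?n" unfolding e'_def by simp
      then have "w^e = w^e' * w^?n" by (simp add: power_add)
      then show ?thesis using Kpow that w0 by simp
    qed
  qed
  have croots: "card {x::'a. x^e' = 1} \<le> e'"
  proof -
    define p where "p = monom (1::'a) e' - 1"
    have "coeff (1::'a poly) e' = 0" using e'pos by (simp add: coeff_1)
    then have "coeff p e' = 1" unfolding p_def by (simp add: coeff_monom)
    then have "p \<noteq> 0" by auto
    moreover have "degree p \<le> e'" unfolding p_def
      by (rule order.trans[OF degree_diff_le_max]) (simp add: degree_monom_le)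
    ultimately have "card {x. poly p x = 0} \<le> e'" by (rule card_roots_le)
    moreover have "{x::'a. x^e' = 1} = {x. poly p x = 0}" unfolding p_def by (simp add: poly_monom)
    ultimately show ?thesis by simp
  qed
  have cK: "card (K-{0}) = ?n" using fin K0 by (simp add: card_Diff_singleton)
  have "\<not> (K - {0} \<subseteq> {x. x^e' = 1})"
  proof
    assume "K-{0} \<subseteq> {x. x^e'=1}"
    then have "card (K-{0}) \<le> card {x::'a. x^e'=1}" by (rule card_mono[rotated]) simp
    then show False using croots cK e'pos by simp
  qed
  then obtain c where c: "c \<in> K-{0}" "c^e' \<noteq> 1" by blast
  have "(\<Sum>w\<in>K. w^e') = (\<Sum>w\<in>K. (c*w)^e')"
    by (rule sum.reindex_bij_witness[where i="\<lambda>y. c * y" and j="\<lambda>y. y / c"]) (use c Kmul in auto)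
  also have "\<dots> = c^e' * (\<Sum>w\<in>K. w^e')" by (simp add: power_mult_distrib sum_distrib_left)
  finally have "(1 - c^e') * (\<Sum>w\<in>K. w^e') = 0" by (simp add: algebra_simps)
  then have "(\<Sum>w\<in>K. w^e') = 0" using c(2) by simp
  moreover have "(\<Sum>w\<in>K. w^e) = (\<Sum>w\<in>K. w^e')" using pe by (rule sum.cong[OF refl])
  ultimately show ?thesis using False by simp
qed

lemma m0: "0 < m" using m2 by simp

lemma pow_sum_U:
  assumes "0 < e" "e < 2*(3^(2*m) - 1)"
  shows "(\<Sum>w\<in>(UNIV::'a set). w^e) = (if e = 3^(2*m) - 1 then -1 else 0)"
proof -
  have "of_nat (card (UNIV::'a set)) = (3::'a)^(2*m)" using cardA by simp
  also have "\<dots> = 0" using three_zero m0 by simp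
  finally have ch: "of_nat (card (UNIV::'a set)) = (0::'a)" .
  have c2: "card (UNIV::'a set) \<ge> 2"
  proof -
    have "(3::nat)^(2*m) \<ge> 3^1" by (rule power_increasing) (use m2 in auto)
    then show ?thesis using cardA by simp
  qed
  have kp: "\<forall>w\<in>UNIV-{0::'a}. w^(card (UNIV::'a set) - 1) = 1" using pow_unit_card by auto
  have km: "\<forall>c\<in>UNIV-{0::'a}. \<forall>x\<in>UNIV. c*x \<in> UNIV \<and> x/c \<in> UNIV" by simp
  have "(\<Sum>w\<in>(UNIV::'a set). w^e) = (if e = card (UNIV::'a set) - 1 then -1 else 0)"
    by (rule pow_sum_gen) (use ch c2 kp km assms cardA in auto)
  then show ?thesis using cardA by simp
qed

lemma pow_sum_S:
  assumes "0 < e" "e < 2*(3^m - 1)"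
  shows "(\<Sum>w\<in>(subF m::'a set). w^e) = (if e = 3^m - 1 then -1 else 0)"
proof -
  have ch: "of_nat (card (subF m::'a set)) = (0::'a)" unfolding card_subF using three_zero m0 by simp
  have c2: "card (subF m::'a set) \<ge> 2"
  proof -
    have "(3::nat)^m \<ge> 3^1" by (rule power_increasing) (use m2 in auto)
    then show ?thesis using card_subF by simp
  qed
  have kp: "\<forall>w\<in>subF m-{0::'a}. w^(card (subF m::'a set) - 1) = 1"
  proof
    fix w :: 'a assume w: "w \<in> subF m - {0}"
    have "w^(3^m) = w" using w unfolding subF_def by simp
    moreover have "(3::nat)^m = Suc (3^m - 1)" by simp
    ultimately have "w^(3^m - 1) * w = w" by (metis power_Suc2)
    then show "w^(card (subF m::'a set) - 1) = 1" using w card_subF by simp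
  qed
  have km: "\<forall>c\<in>subF m-{0::'a}. \<forall>x\<in>subF m. c*x \<in> subF m \<and> x/c \<in> subF m"
    using subF_mult subF_div by blast
  show ?thesis
    using pow_sum_gen[of "subF m" e] ch c2 kp km assms card_subF subF_0 m0 by simp
qed

lemma sum_delta_tr:
  assumes "k < (n::nat)"
  shows "(\<Sum>j<n. tr s ((X j::'a) * (if j = k then -1 else 0))) = - tr s (X k)"
proof -
  have "(\<Sum>j<n. tr s ((X j::'a) * (if j = k then -1 else 0))) = (\<Sum>j<n. if j = k then - tr s (X j) else 0)"
    by (rule sum.cong[OF refl]) (simp add: tr_neg tr_zero)
  also have "\<dots> = - tr s (X k) + (\<Sum>j\<in>{..<n}-{k}. if j = k then - tr s (X j) else 0)"
    by (subst sum.remove[of _ k]) (use assms in auto)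
  also have "(\<Sum>j\<in>{..<n}-{k}. if j = k then - tr s (X j) else (0::'a)) = 0"
    by (rule sum.neutral) auto
  finally show ?thesis by simp
qed

lemma G_atomB:
  assumes k: "k < 2*m"
  shows "(\<lambda>t. tr (2*m) (b * t^(3^k+1))) \<in> GG"
proof -
  define E where "E = (3::nat)^(2*m) - 1 - 3^k"
  define F where "F = (\<lambda>t. \<Sum>w\<in>(UNIV::'a set). LL (b*w^E) t * LL w t)"
  have FG: "F \<in> GG" unfolding F_def by (rule G_sum) (auto intro: G_LL)
  have Ft: "F t = - tr (2*m) (b * t^(3^k+1))" for t
  proof -
    have p: "LL v t * LL w t = (\<Sum>j<2*m. tr (2*m) (v * w^(3^j) * t^(3^j+1)))" for v w
    proof -
      have "LL v t * LL w t = (\<Sum>j<2*m. tr (2*m) ((v*t) * (w*t)^(3^j)))" unfolding LL_def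
        by (rule PROD) (simp_all add: pow_q)
      also have "\<dots> = (\<Sum>j<2*m. tr (2*m) (v * w^(3^j) * t^(3^j+1)))"
        by (rule sum.cong[OF refl]) (simp add: power_mult_distrib power_add mult_ac)
      finally show ?thesis .
    qed
    have "F t = (\<Sum>w\<in>UNIV. \<Sum>j<2*m. tr (2*m) (b*w^E * w^(3^j) * t^(3^j+1)))" unfolding F_def p ..
    also have "\<dots> = (\<Sum>j<2*m. \<Sum>w\<in>UNIV. tr (2*m) (b*w^E * w^(3^j) * t^(3^j+1)))" by (rule sum.swap)
    also have "\<dots> = (\<Sum>j<2*m. tr (2*m) ((b * t^(3^j+1)) * (\<Sum>w\<in>(UNIV::'a set). w^(E + 3^j))))"
    proof (rule sum.cong[OF refl])
      fix j
      have "(\<Sum>w\<in>UNIV. tr (2*m) (b*w^E * w^(3^j) * t^(3^j+1))) = tr (2*m) (\<Sum>w\<in>UNIV. b*w^E * w^(3^j) * t^(3^j+1))"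
        by (rule tr_sum[symmetric]) simp
      also have "(\<Sum>w\<in>UNIV. b*w^E * w^(3^j) * t^(3^j+1)) = (b * t^(3^j+1)) * (\<Sum>w\<in>(UNIV::'a set). w^(E + 3^j))"
        by (simp add: sum_distrib_left power_add mult_ac)
      finally show "(\<Sum>w\<in>UNIV. tr (2*m) (b*w^E * w^(3^j) * t^(3^j+1))) = tr (2*m) ((b * t^(3^j+1)) * (\<Sum>w\<in>(UNIV::'a set). w^(E + 3^j)))" .
    qed
    also have "\<dots> = (\<Sum>j<2*m. tr (2*m) ((b * t^(3^j+1)) * (if j = k then -1 else 0)))"
    proof (rule sum.cong[OF refl])
      fix j assume "j \<in> {..<2*m}"
      then have j: "j < 2*m" by simp
      have "(\<Sum>w\<in>(UNIV::'a set). w^(E + 3^j)) = (if j = k then -1 else 0)"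
        using pow_sum_U[of "E + 3^j"] exp_range[OF k j] unfolding E_def by simp
      then show "tr (2*m) ((b * t^(3^j+1)) * (\<Sum>w\<in>(UNIV::'a set). w^(E + 3^j))) = tr (2*m) ((b * t^(3^j+1)) * (if j = k then -1 else 0))"
        by simp
    qed
    also have "\<dots> = - tr (2*m) (b * t^(3^k+1))" by (rule sum_delta_tr[OF k])
    finally show ?thesis .
  qed
  show ?thesis
  proof (rule G_list[of "[(-1, F)]"])
    show "\<forall>p\<in>set [(-1::'a, F)]. fst p \<in> F3 \<and> snd p \<in> GG" using FG F3_m1 by auto
    fix t show "tr (2*m) (b * t^(3^k+1)) = (\<Sum>p\<leftarrow>[(-1::'a, F)]. fst p * snd p t)" using Ft by simp
  qed
qed

end

context GF
begin

lemma pow_AN: "(a*t^(3^m+1))^(3^j) * (t::'a) = a^(3^j) * t^((3^m+1)*3^j+1)"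
proof -
  have h: "t^((3^m+1)*3^j+1) = (t^(3^m+1))^(3^j) * t" by (simp only: power_add power_one_right power_mult)
  show ?thesis unfolding h by (simp only: power_mult_distrib mult.assoc)
qed

lemma pow_NN: "(t::'a)^(3^m+1) * (t^(3^m+1))^(3^j) = t^((3^m+1)*(3^j+1))"
proof -
  have "(3^m+1)*(3^j+1) = (3^m+1) + (3^m+1)*(3::nat)^j" by (simp add: algebra_simps)
  then have "t^((3^m+1)*(3^j+1)) = t^(3^m+1) * t^((3^m+1)*3^j)" by (simp only: power_add)
  then show ?thesis by (simp only: power_mult)
qed

lemma AL_expand:
  assumes a: "a \<in> subF m"
  shows "AA a t * LL v t = (\<Sum>j<m. 2 * tr (2*m) (v * a^(3^j) * t^((3^m+1)*3^j+1)))"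
proof -
  have aN: "a*t^(3^m+1) \<in> subF m" using a subF_mult N_subF by blast
  let ?f = "\<lambda>j. tr (2*m) ((v*t) * (a*t^(3^m+1))^(3^j))"
  have "AA a t * LL v t = LL v t * AA a t" by (rule mult.commute)
  also have "\<dots> = (\<Sum>j<2*m. ?f j)" unfolding LL_def AA_def by (rule PROD[OF pow_q pow_q])
  also have "\<dots> = (\<Sum>j<m+m. ?f j)" by (simp only: mult_2)
  also have "\<dots> = (\<Sum>j<m. ?f j) + (\<Sum>j<m. ?f (m+j))" by (rule sum_split_add)
  also have "(\<Sum>j<m. ?f (m+j)) = (\<Sum>j<m. ?f j)" by (rule sum.cong[OF refl]) (simp only: subF_frob[OF aN])
  also have "(\<Sum>j<m. ?f j) + (\<Sum>j<m. ?f j) = (\<Sum>j<m. 2 * ?f j)" by (simp only: sum.distrib[symmetric] mult_2)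
  also have "\<dots> = (\<Sum>j<m. 2 * tr (2*m) (v * a^(3^j) * t^((3^m+1)*3^j+1)))"
  proof (rule sum.cong[OF refl])
    fix j
    have "(v*t) * (a*t^(3^m+1))^(3^j) = v * ((a*t^(3^m+1))^(3^j) * t)" by (simp only: mult_ac)
    also have "\<dots> = v * a^(3^j) * t^((3^m+1)*3^j+1)" unfolding pow_AN by (simp only: mult.assoc)
    finally show "2 * ?f j = 2 * tr (2*m) (v * a^(3^j) * t^((3^m+1)*3^j+1))" by (simp only:)
  qed
  finally show ?thesis .
qed

lemma G_atomA:
  assumes i0: "i0 < m"
  shows "(\<lambda>t. tr (2*m) (\<beta> * t^((3^m+1)*3^i0+1))) \<in> GG"
proof -
  define E where "E = (3::nat)^m - 1 - 3^i0"
  define F where "F = (\<lambda>t. \<Sum>a\<in>(subF m::'a set). AA a t * LL (\<beta>*a^E) t)"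
  have FG: "F \<in> GG" unfolding F_def by (rule G_sum) (auto intro: G_AL)
  have Ft: "F t = 2 * (- tr (2*m) (\<beta> * t^((3^m+1)*3^i0+1)))" for t
  proof -
    let ?X = "\<lambda>j. t^((3^m+1)*3^j+1)"
    have "F t = (\<Sum>a\<in>subF m. \<Sum>j<m. 2 * tr (2*m) (\<beta>*a^E * a^(3^j) * ?X j))"
      unfolding F_def by (rule sum.cong[OF refl]) (rule AL_expand, simp)
    also have "\<dots> = (\<Sum>j<m. \<Sum>a\<in>subF m. 2 * tr (2*m) (\<beta>*a^E * a^(3^j) * ?X j))" by (rule sum.swap)
    also have "\<dots> = (\<Sum>j<m. 2 * tr (2*m) ((\<beta> * ?X j) * (if j = i0 then -1 else 0)))"
    proof (rule sum.cong[OF refl])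
      fix j assume "j \<in> {..<m}"
      then have j: "j < m" by simp
      have "(\<Sum>a\<in>subF m. 2 * tr (2*m) (\<beta>*a^E * a^(3^j) * ?X j)) = 2 * tr (2*m) (\<Sum>a\<in>subF m. \<beta>*a^E * a^(3^j) * ?X j)"
        by (simp add: tr_sum sum_distrib_left)
      also have "(\<Sum>a\<in>(subF m::'a set). \<beta>*a^E * a^(3^j) * ?X j) = (\<beta> * ?X j) * (\<Sum>a\<in>(subF m::'a set). a^(E + 3^j))"
        by (simp add: sum_distrib_left power_add mult_ac)
      also have "(\<Sum>a\<in>(subF m::'a set). a^(E + 3^j)) = (if j = i0 then -1 else 0)"
        using pow_sum_S[of "E + 3^j"] exp_range[OF i0 j] unfolding E_def by simp
      finally show "(\<Sum>a\<in>subF m. 2 * tr (2*m) (\<beta>*a^E * a^(3^j) * ?X j)) = 2 * tr (2*m) ((\<beta> * ?X j) * (if j = i0 then -1 else 0))" .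
    qed
    also have "\<dots> = 2 * (\<Sum>j<m. tr (2*m) ((\<beta> * ?X j) * (if j = i0 then -1 else 0)))"
      by (simp add: sum_distrib_left)
    also have "\<dots> = 2 * (- tr (2*m) (\<beta> * ?X i0))" by (simp only: sum_delta_tr[OF i0])
    finally show ?thesis .
  qed
  show ?thesis
  proof (rule G_list[of "[(1, F)]"])
    show "\<forall>p\<in>set [(1::'a, F)]. fst p \<in> F3 \<and> snd p \<in> GG" using FG F3_1 by auto
    fix t
    let ?T = "tr (2*m) (\<beta> * t^((3^m+1)*3^i0+1))"
    have "2 * (- ?T) = ?T + 3 * (- ?T)" by algebra
    then have "2 * (- ?T) = ?T" by (rule mod3)
    then show "?T = (\<Sum>p\<leftarrow>[(1::'a, F)]. fst p * snd p t)" using Ft by simp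
  qed
qed

lemma AAAA_expand:
  assumes x: "x \<in> subF m" and y: "y \<in> subF m"
  shows "AA x t * AA y t = (\<Sum>j<m. tr m (x * y^(3^j) * t^((3^m+1)*(3^j+1))))"
proof -
  have xN: "x*t^(3^m+1) \<in> subF m" using x subF_mult N_subF by blast
  have yN: "y*t^(3^m+1) \<in> subF m" using y subF_mult N_subF by blast
  have "AA x t * AA y t = (2 * tr m (x*t^(3^m+1))) * (2 * tr m (y*t^(3^m+1)))"
    unfolding AA_def using T2_sub[OF xN] T2_sub[OF yN] by simp
  also have "\<dots> = 4 * (tr m (x*t^(3^m+1)) * tr m (y*t^(3^m+1)))" by simp
  also have "\<dots> = tr m (x*t^(3^m+1)) * tr m (y*t^(3^m+1))" using four_eq by simp
  also have "\<dots> = (\<Sum>j<m. tr m ((x*t^(3^m+1)) * (y*t^(3^m+1))^(3^j)))"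
    by (rule PROD) (use xN yN in \<open>simp_all add: subF_def\<close>)
  also have "\<dots> = (\<Sum>j<m. tr m (x * y^(3^j) * t^((3^m+1)*(3^j+1))))"
  proof (rule sum.cong[OF refl])
    fix j
    have "(x*t^(3^m+1)) * (y*t^(3^m+1))^(3^j) = x * y^(3^j) * (t^(3^m+1) * (t^(3^m+1))^(3^j))"
      by (simp add: power_mult_distrib mult_ac)
    then show "tr m ((x*t^(3^m+1)) * (y*t^(3^m+1))^(3^j)) = tr m (x * y^(3^j) * t^((3^m+1)*(3^j+1)))"
      by (simp only: pow_NN)
  qed
  finally show ?thesis .
qed

lemma G_atomC:
  assumes i0: "i0 < m" and c: "c \<in> subF m"
  shows "(\<lambda>t. tr m (c * t^((3^m+1)*(3^i0+1)))) \<in> GG"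
proof -
  define E where "E = (3::nat)^m - 1 - 3^i0"
  define F where "F = (\<lambda>t. \<Sum>a\<in>(subF m::'a set). AA (-(c*a^E)) t * AA a t)"
  have cs: "a \<in> subF m \<Longrightarrow> -(c*a^E) \<in> subF m" for a using c subF_neg subF_mult subF_pow by blast
  have FG: "F \<in> GG" unfolding F_def by (rule G_sum) (auto intro: G_AA cs)
  have Ft: "F t = - tr m ((-c) * t^((3^m+1)*(3^i0+1)))" for t
  proof -
    let ?Y = "\<lambda>j. t^((3^m+1)*(3^j+1))"
    have "F t = (\<Sum>a\<in>subF m. \<Sum>j<m. tr m (-(c*a^E) * a^(3^j) * ?Y j))"
      unfolding F_def by (rule sum.cong[OF refl]) (rule AAAA_expand, auto intro: cs)
    also have "\<dots> = (\<Sum>j<m. \<Sum>a\<in>subF m. tr m (-(c*a^E) * a^(3^j) * ?Y j))" by (rule sum.swap)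
    also have "\<dots> = (\<Sum>j<m. tr m (((-c) * ?Y j) * (if j = i0 then -1 else 0)))"
    proof (rule sum.cong[OF refl])
      fix j assume "j \<in> {..<m}"
      then have j: "j < m" by simp
      have "(\<Sum>a\<in>subF m. tr m (-(c*a^E) * a^(3^j) * ?Y j)) = tr m (\<Sum>a\<in>subF m. -(c*a^E) * a^(3^j) * ?Y j)"
        by (simp add: tr_sum)
      also have "(\<Sum>a\<in>(subF m::'a set). -(c*a^E) * a^(3^j) * ?Y j) = ((-c) * ?Y j) * (\<Sum>a\<in>(subF m::'a set). a^(E + 3^j))"
        unfolding sum_distrib_left by (rule sum.cong[OF refl]) (simp add: power_add mult_ac)
      also have "(\<Sum>a\<in>(subF m::'a set). a^(E + 3^j)) = (if j = i0 then -1 else 0)"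
        using pow_sum_S[of "E + 3^j"] exp_range[OF i0 j] unfolding E_def by simp
      finally show "(\<Sum>a\<in>subF m. tr m (-(c*a^E) * a^(3^j) * ?Y j)) = tr m (((-c) * ?Y j) * (if j = i0 then -1 else 0))" .
    qed
    also have "\<dots> = - tr m ((-c) * ?Y i0)" by (rule sum_delta_tr[OF i0])
    finally show ?thesis .
  qed
  show ?thesis
  proof (rule G_list[of "[(1, F)]"])
    show "\<forall>p\<in>set [(1::'a, F)]. fst p \<in> F3 \<and> snd p \<in> GG" using FG F3_1 by auto
    fix t show "tr m (c * t^((3^m+1)*(3^i0+1))) = (\<Sum>p\<leftarrow>[(1::'a, F)]. fst p * snd p t)"
      using Ft tr_neg by simp
  qed
qed

end

context GF
begin

abbreviation EE :: "('a::{field,finite} \<Rightarrow> 'a) set" where "EE \<equiv> codeE m"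

definition Ef :: "(nat \<Rightarrow> 'a::{field,finite}) \<Rightarrow> (nat \<Rightarrow> 'a) \<Rightarrow> (nat \<Rightarrow> 'a) \<Rightarrow> 'a \<Rightarrow> 'a \<Rightarrow> 'a \<Rightarrow> 'a" where
  "Ef bb bb' cc b h = (\<lambda>t. (\<Sum>i<m. tr (2*m) (bb i * t ^ ((3^m + 1) * 3^i + 1)))
                 + (\<Sum>i<2*m. tr (2*m) (bb' i * t ^ (3^i + 1)))
                 + (\<Sum>i<m. tr m (cc i * t ^ ((3^m + 1) * (3^i + 1))))
                 + tr (2*m) (b * t) + h)"

lemma codeE_mem: "f \<in> EE \<longleftrightarrow> (\<exists>bb bb' cc b h. (\<forall>i. cc i \<in> subF m) \<and> h \<in> F3 \<and> f = Ef bb bb' cc b h)"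
  unfolding codeE_def Ef_def by blast

lemma E_intro: "(\<forall>i. cc i \<in> subF m) \<Longrightarrow> h \<in> F3 \<Longrightarrow> Ef bb bb' cc b h \<in> EE"
  using codeE_mem by blast

lemma E_add:
  assumes "f \<in> EE" "g \<in> EE"
  shows "(\<lambda>t. f t + g t) \<in> EE"
proof -
  obtain bb1 bb1' cc1 b1 h1 where f: "\<forall>i. cc1 i \<in> subF m" "h1 \<in> F3" "f = Ef bb1 bb1' cc1 b1 h1"
    using assms(1) codeE_mem by blast
  obtain bb2 bb2' cc2 b2 h2 where g: "\<forall>i. cc2 i \<in> subF m" "h2 \<in> F3" "g = Ef bb2 bb2' cc2 b2 h2"
    using assms(2) codeE_mem by blast
  have "(\<lambda>t. f t + g t) = Ef (\<lambda>i. bb1 i + bb2 i) (\<lambda>i. bb1' i + bb2' i) (\<lambda>i. cc1 i + cc2 i) (b1 + b2) (h1 + h2)"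
    unfolding f(3) g(3) Ef_def by (rule ext) (simp add: tr_add distrib_right sum.distrib algebra_simps)
  moreover have "\<forall>i. cc1 i + cc2 i \<in> subF m" using f(1) g(1) subF_add by blast
  moreover have "h1 + h2 \<in> F3" using f(2) g(2) F3_add by blast
  ultimately show ?thesis using E_intro by metis
qed

lemma E_scal:
  assumes "f \<in> EE" "k \<in> F3"
  shows "(\<lambda>t. k * f t) \<in> EE"
proof -
  obtain bb bb' cc b h where f: "\<forall>i. cc i \<in> subF m" "h \<in> F3" "f = Ef bb bb' cc b h"
    using assms(1) codeE_mem by blast
  have "(\<lambda>t. k * f t) = Ef (\<lambda>i. k * bb i) (\<lambda>i. k * bb' i) (\<lambda>i. k * cc i) (k * b) (k * h)"
    unfolding f(3) Ef_def by (rule ext) (simp add: tr_scal[OF assms(2)] mult.assoc sum_distrib_left distrib_left)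
  moreover have "\<forall>i. k * cc i \<in> subF m" using f(1) F3_subF[OF assms(2)] subF_mult by blast
  moreover have "k * h \<in> F3" using f(2) assms(2) F3_mult by blast
  ultimately show ?thesis using E_intro by metis
qed

lemma E_0: "(\<lambda>_. 0) \<in> EE"
proof -
  have "(\<lambda>_. 0) = Ef (\<lambda>_. 0) (\<lambda>_. 0) (\<lambda>_. 0) 0 0" unfolding Ef_def by (rule ext) (simp add: tr_zero)
  then show ?thesis using E_intro[of "\<lambda>_. 0" 0] subF_0 F3_0 by metis
qed

lemma E_sum: "finite A \<Longrightarrow> \<forall>x\<in>A. (\<lambda>t. f x t) \<in> EE \<Longrightarrow> (\<lambda>t. \<Sum>x\<in>A. f x t) \<in> EE"
proof (induction A rule: finite_induct)
  case empty then show ?case using E_0 by simp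
next
  case (insert x F)
  then show ?case using E_add[of "\<lambda>t. f x t" "\<lambda>t. \<Sum>x\<in>F. f x t"] by simp
qed

lemma E_list:
  assumes "\<forall>p\<in>set xs. fst p \<in> F3 \<and> snd p \<in> EE" "\<And>t. f t = (\<Sum>p\<leftarrow>xs. fst p * snd p t)"
  shows "f \<in> EE"
proof -
  have "(\<lambda>t. \<Sum>p\<leftarrow>xs. fst p * snd p t) \<in> EE" using assms(1)
  proof (induction xs)
    case Nil then show ?case using E_0 by simp
  next
    case (Cons p xs)
    then show ?case using E_add[OF E_scal[of "snd p" "fst p"]] by simp
  qed
  moreover have "f = (\<lambda>t. \<Sum>p\<leftarrow>xs. fst p * snd p t)" using assms(2) by (rule ext)
  ultimately show ?thesis by simp
qed

lemma sum_if_single: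
  assumes "i < (n::nat)"
  shows "(\<Sum>j<n. tr s ((if j = i then \<beta> else 0) * (X j::'a))) = tr s (\<beta> * X i)"
proof -
  have "(\<Sum>j<n. tr s ((if j = i then \<beta> else 0) * (X j::'a))) = (\<Sum>j<n. if j = i then tr s (\<beta> * X j) else 0)"
    by (rule sum.cong[OF refl]) (simp add: tr_zero)
  also have "\<dots> = tr s (\<beta> * X i) + (\<Sum>j\<in>{..<n}-{i}. if j = i then tr s (\<beta> * X j) else 0)"
    by (subst sum.remove[of _ i]) (use assms in auto)
  also have "(\<Sum>j\<in>{..<n}-{i}. if j = i then tr s (\<beta> * X j) else (0::'a)) = 0"
    by (rule sum.neutral) auto
  finally show ?thesis by simp
qed

lemma sum_zero_tr: "(\<Sum>j<(n::nat). tr s (0 * (X j::'a))) = 0"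
  by (simp add: tr_zero)

lemma E_atomA: "i < m \<Longrightarrow> (\<lambda>t. tr (2*m) (\<beta> * t^((3^m+1)*3^i+1))) \<in> EE"
proof -
  assume i: "i < m"
  have "(\<lambda>t. tr (2*m) (\<beta> * t^((3^m+1)*3^i+1))) = Ef (\<lambda>j. if j = i then \<beta> else 0) (\<lambda>_. 0) (\<lambda>_. 0) 0 0"
    unfolding Ef_def by (rule ext) (simp only: sum_if_single[OF i] sum_zero_tr tr_zero mult_zero_left sum.neutral_const add_0_right)
  then show ?thesis using E_intro subF_0 F3_0 by metis
qed

lemma E_atomB: "k < 2*m \<Longrightarrow> (\<lambda>t. tr (2*m) (\<beta> * t^(3^k+1))) \<in> EE"
proof -
  assume i: "k < 2*m"
  have "(\<lambda>t. tr (2*m) (\<beta> * t^(3^k+1))) = Ef (\<lambda>_. 0) (\<lambda>j. if j = k then \<beta> else 0) (\<lambda>_. 0) 0 0"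
    unfolding Ef_def by (rule ext) (simp only: sum_if_single[OF i] sum_zero_tr tr_zero mult_zero_left sum.neutral_const add_0_right add_0_left)
  then show ?thesis using E_intro subF_0 F3_0 by metis
qed

lemma E_atomC: "i < m \<Longrightarrow> c \<in> subF m \<Longrightarrow> (\<lambda>t. tr m (c * t^((3^m+1)*(3^i+1)))) \<in> EE"
proof -
  assume i: "i < m" and c: "c \<in> subF m"
  have "(\<lambda>t. tr m (c * t^((3^m+1)*(3^i+1)))) = Ef (\<lambda>_. 0) (\<lambda>_. 0) (\<lambda>j. if j = i then c else 0) 0 0"
    unfolding Ef_def by (rule ext) (simp only: sum_if_single[OF i] sum_zero_tr tr_zero mult_zero_left sum.neutral_const add_0_right add_0_left)
  moreover have "Ef (\<lambda>_. 0) (\<lambda>_. 0) (\<lambda>j. if j = i then c else 0) 0 0 \<in> EE"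
    by (rule E_intro) (use c subF_0 F3_0 in auto)
  ultimately show ?thesis by simp
qed

lemma E_L: "LL b \<in> EE"
proof -
  have "LL b = Ef (\<lambda>_. 0) (\<lambda>_. 0) (\<lambda>_. 0) b 0"
    unfolding Ef_def LL_def by (rule ext) (simp add: tr_zero)
  then show ?thesis using E_intro subF_0 F3_0 by metis
qed

lemma E_const: "h \<in> F3 \<Longrightarrow> (\<lambda>_. h) \<in> EE"
proof -
  assume h: "h \<in> F3"
  have "(\<lambda>_. h) = Ef (\<lambda>_. 0) (\<lambda>_. 0) (\<lambda>_. 0) 0 h"
    unfolding Ef_def by (rule ext) (simp add: tr_zero)
  then show ?thesis using E_intro subF_0 h by metis
qed

lemma LL_expand: "LL v t * LL w t = (\<Sum>j<2*m. tr (2*m) (v * w^(3^j) * t^(3^j+1)))"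
proof -
  have "LL v t * LL w t = (\<Sum>j<2*m. tr (2*m) ((v*t) * (w*t)^(3^j)))" unfolding LL_def
    by (rule PROD[OF pow_q pow_q])
  also have "\<dots> = (\<Sum>j<2*m. tr (2*m) (v * w^(3^j) * t^(3^j+1)))"
    by (rule sum.cong[OF refl]) (simp add: power_mult_distrib power_add mult_ac)
  finally show ?thesis .
qed

lemma sq_in_E:
  assumes c: "c \<in> codeC m"
  shows "(\<lambda>t. (c t)^2) \<in> EE"
proof -
  obtain a b h where cdef: "c = (\<lambda>t. tr (2*m) (a * t^(3^m+1) + b*t) + h)"
    and a: "a \<in> subF m" and h: "h \<in> F3"
    using c unfolding codeC_def by blast
  have ct: "c t = AA a t + LL b t + h" for t unfolding cdef AA_def LL_def by (simp add: tr_add)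
  have e1: "(\<lambda>t. (AA a t)^2) \<in> EE"
  proof -
    have "(\<lambda>t. (AA a t)^2) = (\<lambda>t. \<Sum>j<m. tr m ((a * a^(3^j)) * t^((3^m+1)*(3^j+1))))"
      by (rule ext) (simp add: power2_eq_square AAAA_expand[OF a a])
    moreover have "(\<lambda>t. \<Sum>j<m. tr m ((a * a^(3^j)) * t^((3^m+1)*(3^j+1)))) \<in> EE"
      by (rule E_sum) (simp, intro ballI, rule E_atomC, simp, intro subF_mult subF_pow a)
    ultimately show ?thesis by simp
  qed
  have e2: "(\<lambda>t. (LL b t)^2) \<in> EE"
  proof -
    have "(\<lambda>t. (LL b t)^2) = (\<lambda>t. \<Sum>j<2*m. tr (2*m) ((b * b^(3^j)) * t^(3^j+1)))"
      by (rule ext) (simp add: power2_eq_square LL_expand)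
    moreover have "(\<lambda>t. \<Sum>j<2*m. tr (2*m) ((b * b^(3^j)) * t^(3^j+1))) \<in> EE"
      by (rule E_sum) (simp, intro ballI, rule E_atomB, simp)
    ultimately show ?thesis by simp
  qed
  have e3: "(\<lambda>t. AA a t * LL b t) \<in> EE"
  proof -
    have "(\<lambda>t. AA a t * LL b t) = (\<lambda>t. \<Sum>j<m. tr (2*m) ((2 * (b * a^(3^j))) * t^((3^m+1)*3^j+1)))"
      by (rule ext) (simp add: AL_expand[OF a] tr_scal[OF F3_2] mult.assoc)
    moreover have "(\<lambda>t. \<Sum>j<m. tr (2*m) ((2 * (b * a^(3^j))) * t^((3^m+1)*3^j+1))) \<in> EE"
      by (rule E_sum) (simp, intro ballI, rule E_atomA, simp)
    ultimately show ?thesis by simp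
  qed
  have e4: "AA a \<in> EE"
  proof -
    have "m < 2*m" using m0 by simp
    then have "(\<lambda>t. tr (2*m) (a * t^(3^m+1))) \<in> EE" by (rule E_atomB)
    then show ?thesis unfolding AA_def by simp
  qed
  let ?xs = "[(1::'a, \<lambda>t. (AA a t)^2), (1, \<lambda>t. (LL b t)^2), (2, \<lambda>t. AA a t * LL b t),
              (2*h, AA a), (2*h, LL b), (h^2, \<lambda>_. 1)]"
  show ?thesis
  proof (rule E_list[of ?xs])
    have "2*h \<in> F3" using F3_2 h F3_mult by blast
    moreover have "h^2 \<in> F3" using h F3_mult by (simp add: power2_eq_square)
    ultimately show "\<forall>p\<in>set ?xs. fst p \<in> F3 \<and> snd p \<in> EE"
      using e1 e2 e3 e4 E_L E_const[OF F3_1] F3_1 F3_2 by auto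
    fix t show "(c t)^2 = (\<Sum>p\<leftarrow>?xs. fst p * snd p t)"
      unfolding ct by (simp only: list.map prod.sel sum_list_simps) algebra
  qed
qed

lemma CD_sub_E: "codeCD m \<subseteq> (EE)"
proof
  fix f :: "'a \<Rightarrow> 'a" assume "f \<in> codeCD m"
  then obtain V k where f: "f = (\<lambda>t. \<Sum>v\<in>V. k v * v t)" "finite V" "V \<subseteq> incvec ` blocksD m" "\<forall>v\<in>V. k v \<in> F3"
    unfolding codeCD_def span3_def by blast
  have "\<forall>v\<in>V. v \<in> EE"
  proof
    fix v assume "v \<in> V"
    then obtain B where B: "B \<in> blocksD m" "v = incvec B" using f(3) by blast
    then obtain c where c: "c \<in> codeC m" "B = supp c" using blocksD_eq by blast
    have "v = (\<lambda>t. (c t)^2)" using B(2) c(2) incvec_sq codeC_F3[OF c(1)] by metis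
    then show "v \<in> EE" using sq_in_E[OF c(1)] by simp
  qed
  then have "\<forall>v\<in>V. (\<lambda>t. k v * v t) \<in> EE" using f(4) E_scal by blast
  then show "f \<in> EE" unfolding f(1) using E_sum[OF f(2), of "\<lambda>v t. k v * v t"] by blast
qed

lemma E_sub_CD: "EE \<subseteq> (codeCD m :: ('a \<Rightarrow> 'a) set)"
proof
  fix f :: "'a \<Rightarrow> 'a" assume "f \<in> EE"
  then obtain bb bb' cc b h where f: "\<forall>i. cc i \<in> subF m" "h \<in> F3" "f = Ef bb bb' cc b h"
    using codeE_mem by blast
  let ?f1 = "\<lambda>t. \<Sum>i<m. tr (2*m) (bb i * t ^ ((3^m + 1) * 3^i + 1))"
  let ?f2 = "\<lambda>t. \<Sum>i<2*m. tr (2*m) (bb' i * t ^ (3^i + 1))"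
  let ?f3 = "\<lambda>t. \<Sum>i<m. tr m (cc i * t ^ ((3^m + 1) * (3^i + 1)))"
  have g1: "?f1 \<in> GG" by (rule G_sum) (simp, intro ballI, rule G_atomA, simp)
  have g2: "?f2 \<in> GG" by (rule G_sum) (simp, intro ballI, rule G_atomB, simp)
  have g3: "?f3 \<in> GG" by (rule G_sum) (simp, intro ballI, rule G_atomC, simp, use f(1) in simp)
  let ?xs = "[(1::'a, ?f1), (1, ?f2), (1, ?f3), (1, LL b), (h, \<lambda>_. 1)]"
  show "f \<in> codeCD m"
  proof (rule G_list[of ?xs])
    show "\<forall>p\<in>set ?xs. fst p \<in> F3 \<and> snd p \<in> GG" using g1 g2 g3 G_L G_one F3_1 f(2) by auto
    fix t show "f t = (\<Sum>p\<leftarrow>?xs. fst p * snd p t)"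
      unfolding f(3) Ef_def LL_def by simp
  qed
qed

lemma CD_eq_E: "codeCD m = (EE)"
  using CD_sub_E E_sub_CD by blast

end

lemma span_comp:
  assumes S: "\<forall>v\<in>S. (\<lambda>t. v (\<sigma> t)) \<in> S" and f: "f \<in> span3 (S :: ('a \<Rightarrow> 'b::field) set)"
  shows "(\<lambda>t. f (\<sigma> t)) \<in> span3 S"
proof -
  obtain V k where fV: "f = (\<lambda>t. \<Sum>v\<in>V. k v * v t)" "finite V" "V \<subseteq> S" "\<forall>v\<in>V. k v \<in> F3"
    using f unfolding span3_def by blast
  have "\<forall>v\<in>V. (\<lambda>t. k v * v (\<sigma> t)) \<in> span3 S"
  proof
    fix v assume v: "v \<in> V"
    then have "(\<lambda>t. v (\<sigma> t)) \<in> span3 S" using S fV(3) span_gen by blast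
    then show "(\<lambda>t. k v * v (\<sigma> t)) \<in> span3 S" using span_scal fV(4) v by blast
  qed
  then have "(\<lambda>t. \<Sum>v\<in>V. k v * v (\<sigma> t)) \<in> span3 S"
    using span_sum[OF fV(2), of "\<lambda>v t. k v * v (\<sigma> t)"] by blast
  then show ?thesis unfolding fV(1) by simp
qed

context GF
begin

lemma aff_bij: "(s1::'a) \<noteq> 0 \<Longrightarrow> bij (\<lambda>t. s1*t + s2)"
  by (rule bij_betw_byWitness[where f'="\<lambda>t. (t - s2)/s1"]) (auto simp: field_simps)

lemma hweight_bij: "bij \<sigma> \<Longrightarrow> hweight (\<lambda>t. c (\<sigma> t)) = hweight (c :: 'a \<Rightarrow> 'a)"
  unfolding hweight_def
  by (rule bij_betw_same_card[of \<sigma>]) (auto simp: bij_betw_def bij_def inj_on_def intro: inj_on_subset)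

lemma supp_comp: "supp (\<lambda>t. c (\<sigma> t)) = \<sigma> -` supp (c :: 'a \<Rightarrow> 'a)"
  unfolding supp_def by auto

lemma incvec_comp: "incvec (\<sigma> -` B) = (\<lambda>t. (incvec B (\<sigma> t) :: 'a))"
  unfolding incvec_def by auto

lemma codeC_affine:
  assumes c: "c \<in> codeC m" and s1: "(s1::'a) \<noteq> 0"
  shows "(\<lambda>t. c (s1*t + s2)) \<in> codeC m"
proof -
  obtain a b h where cdef: "c = (\<lambda>t. tr (2*m) (a * t^(3^m+1) + b*t) + h)"
    and a: "a \<in> subF m" and h: "h \<in> F3"
    using c unfolding codeC_def by blast
  define u where "u = s2/s1"
  define a' where "a' = a * s1^(3^m+1)"
  define b' where "b' = 2*a'*u^(3^m) + b*s1"
  define h' where "h' = tr (2*m) (a'*u^(3^m+1)) + tr (2*m) (b*s2) + h"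
  have a': "a' \<in> subF m" unfolding a'_def using a N_subF subF_mult by blast
  have h': "h' \<in> F3" unfolding h'_def using T2_F3 h F3_add by blast
  have "(\<lambda>t. c (s1*t + s2)) = (\<lambda>t. tr (2*m) (a' * t^(3^m+1) + b' * t) + h')"
  proof
    fix t
    have e1: "s1*t + s2 = s1*(t+u)" unfolding u_def using s1 by (simp add: field_simps)
    have e2: "a * (s1*(t+u))^(3^m+1) = a' * (t+u)^(3^m+1)" unfolding a'_def
      by (simp only: power_mult_distrib mult.assoc)
    have "c (s1*t + s2) = tr (2*m) (a * (s1*t+s2)^(3^m+1)) + tr (2*m) (b*(s1*t+s2)) + h"
      unfolding cdef by (simp add: tr_add)
    also have "tr (2*m) (a * (s1*t+s2)^(3^m+1)) = tr (2*m) (a' * (t+u)^(3^m+1))" unfolding e1 e2 ..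
    also have "\<dots> = tr (2*m) (a'*t^(3^m+1)) + tr (2*m) (2*a'*u^(3^m)*t) + tr (2*m) (a'*u^(3^m+1))"
      by (rule shift_id[OF a'])
    also have "tr (2*m) (b*(s1*t+s2)) = tr (2*m) ((b*s1)*t) + tr (2*m) (b*s2)"
      by (simp add: tr_add distrib_left mult.assoc)
    finally have L: "c (s1*t + s2) = tr (2*m) (a'*t^(3^m+1)) + tr (2*m) (2*a'*u^(3^m)*t) + tr (2*m) (a'*u^(3^m+1))
        + (tr (2*m) ((b*s1)*t) + tr (2*m) (b*s2)) + h" .
    have R: "tr (2*m) (a' * t^(3^m+1) + b' * t) = tr (2*m) (a'*t^(3^m+1)) + tr (2*m) (2*a'*u^(3^m)*t) + tr (2*m) ((b*s1)*t)"
      unfolding b'_def by (simp add: tr_add distrib_right)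
    show "c (s1*t + s2) = tr (2*m) (a' * t^(3^m+1) + b' * t) + h'"
      unfolding L R h'_def by (simp only: add_ac)
  qed
  then show ?thesis unfolding codeC_def using a' h' by blast
qed

lemma codeCD_affine:
  assumes c: "c \<in> codeCD m" and s1: "(s1::'a) \<noteq> 0"
  shows "(\<lambda>t. c (s1*t + s2)) \<in> codeCD m"
proof -
  have "\<forall>v\<in>incvec ` blocksD m. (\<lambda>t. v (s1*t + s2)) \<in> incvec ` (blocksD m :: 'a set set)"
  proof
    fix v assume "v \<in> incvec ` (blocksD m :: 'a set set)"
    then obtain B where B: "B \<in> blocksD m" "v = incvec B" by blast
    from B(1) obtain c0 where c0: "c0 \<in> codeC m" "hweight c0 = dd" "B = supp c0"
      unfolding blocksD_eq by blast
    let ?c1 = "\<lambda>t. c0 (s1*t + s2)"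
    have "?c1 \<in> codeC m" by (rule codeC_affine[OF c0(1) s1])
    moreover have "hweight ?c1 = dd" using hweight_bij[OF aff_bij[OF s1]] c0(2) by simp
    ultimately have sb: "supp ?c1 \<in> blocksD m" unfolding blocksD_eq by blast
    have "(\<lambda>t. v (s1*t + s2)) = incvec (supp ?c1)"
      unfolding B(2) c0(3) incvec_def supp_def by auto
    then show "(\<lambda>t. v (s1*t + s2)) \<in> incvec ` blocksD m" using sb by (rule image_eqI)
  qed
  then show ?thesis using c unfolding codeCD_def by (rule span_comp)
qed

lemma W_affine:
  assumes B: "B \<in> {supp c | c. c \<in> codeCD m \<and> hweight c = w}" and s1: "(s1::'a) \<noteq> 0"
  shows "(\<lambda>t. s1*t + s2) -` B \<in> {supp c | c. c \<in> codeCD m \<and> hweight (c::'a \<Rightarrow> 'a) = w}"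
proof -
  obtain c where c: "B = supp c" "c \<in> codeCD m" "hweight (c::'a\<Rightarrow>'a) = w" using B by blast
  let ?c1 = "\<lambda>t. c (s1*t + s2)"
  have "?c1 \<in> codeCD m" by (rule codeCD_affine[OF c(2) s1])
  moreover have "hweight ?c1 = w" using hweight_bij[OF aff_bij[OF s1]] c(3) by simp
  moreover have "supp ?c1 = (\<lambda>t. s1*t + s2) -` B" unfolding c(1) by (rule supp_comp)
  ultimately show ?thesis by blast
qed

lemma design:
  assumes TT: "card (TT::'a set) = 2"
  shows "card {B \<in> {supp c | c. c \<in> codeCD m \<and> hweight c = w}. TT \<subseteq> B}
       = card {B \<in> {supp c | c. c \<in> codeCD m \<and> hweight (c::'a\<Rightarrow>'a) = w}. {0::'a, 1} \<subseteq> B}"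
proof -
  obtain x y :: 'a where T2: "TT = {x, y}" "x \<noteq> y" using TT by (auto simp: card_2_iff)
  let ?W = "{supp c | c. c \<in> codeCD m \<and> hweight (c::'a\<Rightarrow>'a) = w}"
  define s1 where "s1 = y - x"
  have s1: "s1 \<noteq> 0" unfolding s1_def using T2(2) by simp
  have s1': "1/s1 \<noteq> 0" using s1 by simp
  let ?\<sigma> = "\<lambda>t. s1*t + x"
  let ?\<tau> = "\<lambda>t. (1/s1)*t + (-x/s1)"
  have st: "?\<sigma> (?\<tau> t) = t" for t using s1 by (simp add: field_simps)
  have ts: "?\<tau> (?\<sigma> t) = t" for t using s1 by (simp add: field_simps)
  have "bij_betw (\<lambda>B. ?\<sigma> -` B) {B \<in> ?W. TT \<subseteq> B} {B \<in> ?W. {0, 1} \<subseteq> B}"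
  proof (rule bij_betw_byWitness[where f'="\<lambda>B. ?\<tau> -` B"])
    show "\<forall>B\<in>{B \<in> ?W. TT \<subseteq> B}. ?\<tau> -` (?\<sigma> -` B) = B" using st by auto
    show "\<forall>B\<in>{B \<in> ?W. {0, 1} \<subseteq> B}. ?\<sigma> -` (?\<tau> -` B) = B" using ts by auto
    show "(\<lambda>B. ?\<sigma> -` B) ` {B \<in> ?W. TT \<subseteq> B} \<subseteq> {B \<in> ?W. {0, 1} \<subseteq> B}"
    proof
      fix B' assume "B' \<in> (\<lambda>B. ?\<sigma> -` B) ` {B \<in> ?W. TT \<subseteq> B}"
      then obtain B where B: "B \<in> ?W" "TT \<subseteq> B" "B' = ?\<sigma> -` B" by blast
      have "B' \<in> ?W" unfolding B(3) by (rule W_affine[OF B(1) s1])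
      moreover have "{0, 1} \<subseteq> B'" using B(2,3) T2(1) unfolding s1_def by auto
      ultimately show "B' \<in> {B \<in> ?W. {0, 1} \<subseteq> B}" by blast
    qed
    show "(\<lambda>B. ?\<tau> -` B) ` {B \<in> ?W. {0, 1} \<subseteq> B} \<subseteq> {B \<in> ?W. TT \<subseteq> B}"
    proof
      fix B' assume "B' \<in> (\<lambda>B. ?\<tau> -` B) ` {B \<in> ?W. {0, 1} \<subseteq> B}"
      then obtain B where B: "B \<in> ?W" "{0, 1} \<subseteq> B" "B' = ?\<tau> -` B" by blast
      have W: "B' \<in> ?W" unfolding B(3) by (rule W_affine[OF B(1) s1'])
      have t0: "?\<tau> x = 0" by (simp add: divide_inverse)
      have "?\<tau> y = (y - x)/s1" by (simp add: divide_inverse algebra_simps)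
      then have t1: "?\<tau> y = 1" using s1 unfolding s1_def by simp
      have "TT \<subseteq> B'" using B(2,3) T2(1) t0 t1 by auto
      with W show "B' \<in> {B \<in> ?W. TT \<subseteq> B}" by blast
    qed
  qed
  then show ?thesis by (rule bij_betw_same_card)
qed

end

theorem theorem3p15:
  fixes m :: nat
  assumes "m \<ge> 2"
    and "card (UNIV :: 'a set) = 3 ^ (2*m)"
  shows "(codeCD m :: ('a \<Rightarrow> 'a) set) = codeE m
    \<and> (\<forall>s1 s2 c. s1 \<noteq> (0::'a::{field,finite}) \<longrightarrow> c \<in> (codeCD m :: ('a \<Rightarrow> 'a) set)
          \<longrightarrow> (\<lambda>t. c (s1 * t + s2)) \<in> codeCD m)
    \<and> (\<forall>w>0. (\<exists>c \<in> (codeCD m :: ('a \<Rightarrow> 'a) set). hweight c = w) \<longrightarrow>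
          (\<exists>lam. \<forall>T :: 'a set. card T = 2 \<longrightarrow>
              card {B \<in> {supp c | c. c \<in> (codeCD m :: ('a \<Rightarrow> 'a) set) \<and> hweight c = w}. T \<subseteq> B} = lam))"
proof -
  interpret GF m "TYPE('a)" by unfold_locales (use assms in auto)
  show ?thesis
  proof (intro conjI allI impI)
    show "(codeCD m :: ('a \<Rightarrow> 'a) set) = codeE m" by (rule CD_eq_E)
  next
    fix s1 s2 :: 'a and c assume "s1 \<noteq> 0" "c \<in> (codeCD m :: ('a \<Rightarrow> 'a) set)"
    then show "(\<lambda>t. c (s1 * t + s2)) \<in> codeCD m" by (intro codeCD_affine)
  next
    fix w :: nat
    show "\<exists>lam. \<forall>T :: 'a set. card T = 2 \<longrightarrow>
              card {B \<in> {supp c | c. c \<in> (codeCD m :: ('a \<Rightarrow> 'a) set) \<and> hweight c = w}. T \<subseteq> B} = lam"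
      using design by blast
  qed
qed

end
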